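(* Let $d\ge1$. Every partition $\pi\in\mathrm{NC}_d(\mathbf S)$ has exactly $\mathrm{rk}(\pi)+1$ complementary regions. Consequently, the maximal elements of $\mathrm{NC}_d(\mathbf S)$ are exactly those with $d$ complementary regions.
   Context: $\mathbf S\subset\mathbb C$ is the unit circle, regarded as the boundary of the closed unit disk. A partition of $\mathbf S$ is noncrossing if the convex hulls of its blocks are pairwise disjoint, and is a degree-$d$ partition if $z^d=w^d$ whenever $z,w$ lie in the same block. $\mathrm{NC}_d(\mathbf S)$ is the poset of noncrossing degree-$d$ partitions of $\mathbf S$ ordered by refinement (finer below coarser). If $\pi$ has non-singleton blocks $A_1,\dots,A_k$, its total criticality (rank) is $\mathrm{rk}(\pi)=|A_1|+\cdots+|A_k|-k$. The complementary regions of $\pi$ are the connected components of the closed disk minus the union of the convex hulls of the blocks of $\pi$. *)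

theory Defs
  imports "HOL-Analysis.Analysis" "HOL-Library.Disjoint_Sets"
begin

definition unit_circle :: "complex set" where
  "unit_circle = sphere 0 1"

definition noncrossing :: "complex set set \<Rightarrow> bool" where
  "noncrossing P \<longleftrightarrow>
     (\<forall>A\<in>P. \<forall>B\<in>P. A \<noteq> B \<longrightarrow> convex hull A \<inter> convex hull B = {})"

definition degree_partition :: "nat \<Rightarrow> complex set set \<Rightarrow> bool" where
  "degree_partition d P \<longleftrightarrow> (\<forall>A\<in>P. \<forall>z\<in>A. \<forall>w\<in>A. z ^ d = w ^ d)"

definition NC :: "nat \<Rightarrow> complex set set set" where
  "NC d = {P. partition_on unit_circle P \<and> noncrossing P \<and> degree_partition d P}"

definition refines :: "complex set set \<Rightarrow> complex set set \<Rightarrow> bool" where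
  "refines P Q \<longleftrightarrow> (\<forall>A\<in>P. \<exists>B\<in>Q. A \<subseteq> B)"

definition maximal_NC :: "nat \<Rightarrow> complex set set \<Rightarrow> bool" where
  "maximal_NC d P \<longleftrightarrow> P \<in> NC d \<and> (\<forall>Q\<in>NC d. refines P Q \<longrightarrow> Q = P)"

definition nonsingleton_blocks :: "complex set set \<Rightarrow> complex set set" where
  "nonsingleton_blocks P = {A\<in>P. \<not> is_singleton A}"

definition rk :: "complex set set \<Rightarrow> nat" where
  "rk P = (\<Sum>A\<in>nonsingleton_blocks P. card A - 1)"

definition regions :: "complex set set \<Rightarrow> complex set set" where
  "regions P = components (cball 0 1 - (\<Union>A\<in>P. convex hull A))"

end

theory Submission
  imports Defs
begin

section \<open>Counterclockwise angle\<close>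

definition cd :: "complex \<Rightarrow> complex \<Rightarrow> real" where
  "cd a q = Arg2pi (q / a)"

lemma cd_ge0: "0 \<le> cd a q" and cd_less: "cd a q < 2*pi"
  using Arg2pi[of "q/a"] by (auto simp: cd_def)

lemma cd_cis:
  assumes "norm a = 1" "norm q = 1"
  shows "q = a * cis (cd a q)"
proof -
  have a0: "a \<noteq> 0" using assms by auto
  have "q / a = complex_of_real (cmod (q/a)) * exp (\<i> * complex_of_real (cd a q))"
    using Arg2pi[of "q/a"] unfolding cd_def is_Arg_def by blast
  also have "cmod (q/a) = 1" using assms by (simp add: norm_divide)
  finally have "q / a = cis (cd a q)" by (simp add: cis_conv_exp)
  then show ?thesis using a0 by (simp add: field_simps)
qed

lemma cd_eqI:
  assumes "norm a = 1" "q = a * cis t" "0 \<le> t" "t < 2*pi"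
  shows "cd a q = t"
proof -
  have a0: "a \<noteq> 0" using assms by auto
  have "q / a = complex_of_real 1 * exp (\<i> * complex_of_real t)"
    using assms a0 by (simp add: cis_conv_exp)
  then show ?thesis unfolding cd_def using assms by (intro Arg2pi_unique) auto
qed

lemma cd_self: "norm a = 1 \<Longrightarrow> cd a a = 0"
  by (rule cd_eqI) auto

lemma cd_zero_iff:
  assumes "norm a = 1" "norm q = 1"
  shows "cd a q = 0 \<longleftrightarrow> q = a"
  using cd_cis[OF assms] cd_self[OF assms(1)] by auto

lemma cis_minus_2pi: "cis (x - 2*pi) = cis x"
  by (simp add: cis.ctr complex_eq_iff cos_diff sin_diff)

lemma cd_add:
  assumes "norm a = 1" "norm b = 1" "norm q = 1"
  shows "cd a q = (if cd a b + cd b q < 2*pi then cd a b + cd b q else cd a b + cd b q - 2*pi)"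
proof -
  have "q = a * cis (cd a b + cd b q)"
    using cd_cis[OF assms(1,2)] cd_cis[OF assms(2,3)] by (metis cis_mult mult.assoc)
  then show ?thesis
    using cd_ge0[of a b] cd_ge0[of b q] cd_less[of a b] cd_less[of b q]
    by (auto intro!: cd_eqI assms simp: cis_minus_2pi)
qed

lemma cd_swap:
  assumes "norm a = 1" "norm q = 1" "a \<noteq> q"
  shows "cd a q + cd q a = 2*pi"
proof -
  have "cd a a = 0" using cd_self assms by auto
  moreover have "cd a q \<noteq> 0" using cd_zero_iff assms by auto
  ultimately show ?thesis using cd_add[OF assms(1,2,1)] cd_ge0[of a q] cd_ge0[of q a]
    by (auto split: if_splits)
qed

lemma cis_eq_1_int:
  assumes "cis x = 1"
  shows "\<exists>n::int. x = 2*pi*n"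
proof -
  define n where "n = floor (x / (2*pi))"
  define r where "r = x - 2*pi*n"
  have r0: "0 \<le> r" and r1: "r < 2*pi"
    unfolding r_def n_def using floor_divide_lower[of "2*pi" x] floor_divide_upper[of "2*pi" x]
    by (auto simp: algebra_simps)
  have "cis r = cis x * cis (- (2*pi*n))" by (simp add: r_def cis_mult)
  also have "cis (- (2*pi*n)) = 1"
    using cis_multiple_2pi[of "- of_int n"] by simp
  finally have "cis r = 1" using assms by simp
  then have "r = 0" using exp_i_ne_1[of r] r0 r1 by (cases "r = 0") (auto simp: cis_conv_exp)
  then show ?thesis unfolding r_def by auto
qed

definition fib :: "nat \<Rightarrow> complex \<Rightarrow> complex set" where
  "fib d w = {z. norm z = 1 \<and> z ^ d = w ^ d}"

lemma fib_param:
  assumes "norm a = 1" "norm w = 1" "d \<ge> 1"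
  defines "s \<equiv> 2*pi / real d"
  obtains \<rho> where "0 \<le> \<rho>" "\<rho> < s" "\<rho> = 0 \<longleftrightarrow> a ^ d = w ^ d"
    "fib d w = (\<lambda>j. a * cis (\<rho> + real j * s)) ` {..<d}"
    "\<And>j. j < d \<Longrightarrow> cd a (a * cis (\<rho> + real j * s)) = \<rho> + real j * s"
proof -
  have s0: "s > 0" using assms by (simp add: s_def)
  have ds: "real d * s = 2*pi" using assms by (simp add: s_def)
  define t where "t = cd a w"
  define m where "m = floor (t / s)"
  define \<rho> where "\<rho> = t - m * s"
  have r0: "0 \<le> \<rho>" and r1: "\<rho> < s"
    unfolding \<rho>_def m_def using floor_divide_lower[OF s0, of t] floor_divide_upper[OF s0, of t]
    by (auto simp: algebra_simps)
  have t0: "0 \<le> t" "t < 2*pi" unfolding t_def using cd_ge0 cd_less by auto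
  have m0: "0 \<le> m" unfolding m_def using t0 s0 by simp
  have wt: "w = a * cis t" unfolding t_def using cd_cis assms by auto
  have an: "a \<noteq> 0" using assms by auto
  have pw: "\<And>x. (a * cis x) ^ d = a ^ d * cis (real d * x)"
    by (simp only: power_mult_distrib Complex.DeMoivre)
  have key: "(a * cis x) ^ d = w ^ d \<longleftrightarrow> (\<exists>n::int. x = t + n * s)" for x
  proof -
    have "(a * cis x) ^ d = w ^ d \<longleftrightarrow> cis (real d * x) = cis (real d * t)"
      using an by (simp add: wt pw)
    also have "\<dots> \<longleftrightarrow> cis (real d * x - real d * t) = 1"
    proof
      assume "cis (real d * x) = cis (real d * t)"
      then show "cis (real d * x - real d * t) = 1"
        by (metis cis_divide divide_self_if cis_neq_zero)
    next
      assume "cis (real d * x - real d * t) = 1"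
      then have "cis (real d * x - real d * t) * cis (real d * t) = cis (real d * t)" by simp
      then show "cis (real d * x) = cis (real d * t)" by (simp add: cis_mult)
    qed
    also have "\<dots> \<longleftrightarrow> (\<exists>n::int. x = t + n * s)"
    proof
      assume "cis (real d * x - real d * t) = 1"
      then obtain n :: int where "real d * x - real d * t = 2*pi*n" using cis_eq_1_int by blast
      then have "x = t + n * s" using assms by (simp add: s_def field_simps)
      then show "\<exists>n::int. x = t + n * s" by blast
    next
      assume "\<exists>n::int. x = t + n * s"
      then obtain n :: int where "x = t + n * s" by blast
      then have "real d * x - real d * t = 2*pi*n" using ds by (simp add: algebra_simps)
      then show "cis (real d * x - real d * t) = 1"
        using cis_multiple_2pi[of "of_int n"] by simp
    qed
    finally show ?thesis .
  qed
  have cdj: "cd a (a * cis (\<rho> + real j * s)) = \<rho> + real j * s" if "j < d" for j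
  proof (rule cd_eqI[OF assms(1) refl])
    show "0 \<le> \<rho> + real j * s" using r0 s0 by simp
    have "real j + 1 \<le> real d" using that by simp
    then have "(real j + 1) * s \<le> real d * s" using s0 by (intro mult_right_mono) auto
    then show "\<rho> + real j * s < 2*pi" using r1 ds by (simp add: algebra_simps)
  qed
  have "fib d w = (\<lambda>j. a * cis (\<rho> + real j * s)) ` {..<d}"
  proof (intro set_eqI iffI)
    fix z assume z: "z \<in> fib d w"
    then have nz: "norm z = 1" "z ^ d = w ^ d" by (auto simp: fib_def)
    define x where "x = cd a z"
    have zx: "z = a * cis x" unfolding x_def using cd_cis assms nz by auto
    obtain n :: int where n: "x = t + n * s" using key[of x] nz zx by auto
    have x0: "0 \<le> x" "x < 2*pi" unfolding x_def using cd_ge0 cd_less by auto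
    define j where "j = m + n"
    have xj: "x = \<rho> + j * s" unfolding j_def \<rho>_def n by (simp add: algebra_simps)
    have "j * s > -s" using xj x0 r1 by simp
    then have "real_of_int (j+1) * s > 0" by (simp add: algebra_simps)
    then have "real_of_int (j+1) > 0" using s0 by (simp add: zero_less_mult_iff)
    then have j0: "0 \<le> j" by simp
    have "j * s < real d * s" using xj x0 r0 ds by simp
    then have "real_of_int j < real_of_int (int d)" using s0 by simp
    then have "j < int d" by (simp only: of_int_less_iff)
    then show "z \<in> (\<lambda>j. a * cis (\<rho> + real j * s)) ` {..<d}"
      using j0 zx xj by (intro image_eqI[of _ _ "nat j"]) auto
  next
    fix z assume "z \<in> (\<lambda>j. a * cis (\<rho> + real j * s)) ` {..<d}"
    then obtain j where j: "j < d" "z = a * cis (\<rho> + real j * s)" by auto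
    have "\<rho> + real j * s = t + of_int (int j - m) * s"
      unfolding \<rho>_def by (simp add: algebra_simps)
    then have "z ^ d = w ^ d" using key j by blast
    moreover have "norm z = 1" using j assms by (simp add: norm_mult)
    ultimately show "z \<in> fib d w" by (simp add: fib_def)
  qed
  moreover have "\<rho> = 0 \<longleftrightarrow> a ^ d = w ^ d"
  proof
    assume "\<rho> = 0"
    then have "a * cis 0 \<in> fib d w" using calculation assms(3) by force
    then show "a ^ d = w ^ d" by (simp add: fib_def)
  next
    assume aw: "a ^ d = w ^ d"
    have "a \<in> fib d w" using aw assms by (simp add: fib_def)
    then obtain j where j: "j < d" "a = a * cis (\<rho> + real j * s)" using calculation by auto
    then have "cd a a = \<rho> + real j * s" using cdj by metis
    then have "\<rho> + real j * s = 0" using cd_self assms by simp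
    moreover have "real j * s \<ge> 0" using s0 by simp
    ultimately show "\<rho> = 0" using r0 by linarith
  qed
  ultimately show ?thesis using that r0 r1 cdj by blast
qed


section \<open>Gaps of a block\<close>

definition blk :: "complex set \<Rightarrow> bool" where
  "blk A \<longleftrightarrow> finite A \<and> (\<forall>a\<in>A. norm a = 1) \<and> 2 \<le> card A"

definition gp :: "complex set \<Rightarrow> complex \<Rightarrow> real" where
  "gp A a = Min (cd a ` (A - {a}))"

definition hv :: "complex set \<Rightarrow> complex \<Rightarrow> complex" where
  "hv A a = a * cis (gp A a / 2)"

definition hc :: "complex set \<Rightarrow> complex \<Rightarrow> real" where
  "hc A a = cos (gp A a / 2)"

definition hp :: "complex set \<Rightarrow> complex \<Rightarrow> complex set" where
  "hp A a = {y. hc A a < hv A a \<bullet> y}"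

lemma cd_pos: "norm a = 1 \<Longrightarrow> norm b = 1 \<Longrightarrow> b \<noteq> a \<Longrightarrow> 0 < cd a b"
  using cd_ge0[of a b] cd_zero_iff[of a b] by auto

lemma gp_props:
  assumes "blk A" "a \<in> A"
  shows "0 < gp A a" "gp A a < 2*pi" "\<exists>b\<in>A. b \<noteq> a \<and> cd a b = gp A a"
    "\<And>b. b \<in> A \<Longrightarrow> b \<noteq> a \<Longrightarrow> gp A a \<le> cd a b"
proof -
  have fin: "finite (A - {a})" using assms by (auto simp: blk_def)
  have c1: "card (A - {a}) \<ge> 1" using assms by (auto simp: blk_def)
  have ne: "A - {a} \<noteq> {}"
  proof
    assume "A - {a} = {}"
    then have "card (A - {a}) = 0" by (metis card.empty)
    with c1 show False by simp
  qed
  have mem: "gp A a \<in> cd a ` (A - {a})" unfolding gp_def using fin ne by (intro Min_in) auto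
  then obtain b where b: "b \<in> A" "b \<noteq> a" "gp A a = cd a b" by auto
  show "\<exists>b\<in>A. b \<noteq> a \<and> cd a b = gp A a" using b by auto
  show "0 < gp A a" using b cd_pos assms by (auto simp: blk_def)
  show "gp A a < 2*pi" using b cd_less by auto
  show "\<And>b. b \<in> A \<Longrightarrow> b \<noteq> a \<Longrightarrow> gp A a \<le> cd a b"
    unfolding gp_def using fin by (intro Min_le) auto
qed

lemma blk_norm: "blk A \<Longrightarrow> a \<in> A \<Longrightarrow> norm a = 1"
  by (auto simp: blk_def)

lemma inner_Re_cnj: "x \<bullet> y = Re (cnj x * y)"
  by (simp add: inner_complex_def)

lemma cnj_self_mult: "norm a = 1 \<Longrightarrow> cnj a * a = 1"
  using complex_norm_square[of a] by (simp add: mult.commute)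

lemma inner_cis_cis:
  assumes "norm a = 1"
  shows "(a * cis u) \<bullet> (a * cis t) = cos (t - u)"
proof -
  have "cnj (a * cis u) * (a * cis t) = (cnj a * a) * cis (t - u)"
    by (simp add: cis_cnj cis_mult algebra_simps)
  then show ?thesis using cnj_self_mult[OF assms] by (simp add: inner_Re_cnj)
qed

lemma norm_hv: "norm a = 1 \<Longrightarrow> norm (hv A a) = 1"
  by (simp add: hv_def norm_mult)

lemma hp_char:
  assumes "norm a = 1" "norm q = 1" "0 < g" "g < 2*pi"
  shows "cos (g/2) < (a * cis (g/2)) \<bullet> q \<longleftrightarrow> 0 < cd a q \<and> cd a q < g"
proof -
  define t where "t = cd a q"
  have t0: "0 \<le> t" "t < 2*pi" unfolding t_def using cd_ge0 cd_less by auto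
  have q: "q = a * cis t" unfolding t_def using cd_cis assms by auto
  have "(a * cis (g/2)) \<bullet> q = cos (t - g/2)" using q inner_cis_cis assms by simp
  moreover have "cos (t - g/2) - cos (g/2) = 2 * sin (t/2) * sin ((g - t)/2)"
  proof -
    have "cos (t - g/2) - cos (g/2) = 2 * sin (((t - g/2) + g/2)/2) * sin ((g/2 - (t - g/2))/2)"
      by (rule cos_diff_cos)
    moreover have "((t - g/2) + g/2)/2 = t/2" "(g/2 - (t - g/2))/2 = (g - t)/2" by (simp_all add: field_simps)
    ultimately show ?thesis by simp
  qed
  moreover have "0 < 2 * sin (t/2) * sin ((g - t)/2) \<longleftrightarrow> 0 < t \<and> t < g"
  proof (cases "t = 0")
    case True then show ?thesis by simp
  next
    case False
    then have st: "sin (t/2) > 0" using t0 by (intro sin_gt_zero) auto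
    have "0 < sin ((g - t)/2) \<longleftrightarrow> t < g"
    proof
      assume "t < g" then show "0 < sin ((g - t)/2)" using assms t0 by (intro sin_gt_zero) auto
    next
      assume h: "0 < sin ((g - t)/2)"
      show "t < g"
      proof (rule ccontr)
        assume "\<not> t < g"
        then have "0 \<le> sin ((t - g)/2)" using t0 assms by (intro sin_ge_zero) auto
        moreover have "sin ((g - t)/2) = - sin ((t - g)/2)"
          by (metis minus_diff_eq sin_minus divide_minus_left)
        ultimately have "sin ((g - t)/2) \<le> 0" by simp
        then show False using h by simp
      qed
    qed
    then show ?thesis using st False t0 by (simp add: zero_less_mult_iff)
  qed
  ultimately have "cos (g/2) < (a * cis (g/2)) \<bullet> q \<longleftrightarrow> 0 < t \<and> t < g"
  proof -
    assume e1: "(a * cis (g/2)) \<bullet> q = cos (t - g/2)"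
      and e2: "cos (t - g/2) - cos (g/2) = 2 * sin (t/2) * sin ((g - t)/2)"
      and e3: "(0 < 2 * sin (t/2) * sin ((g - t)/2)) \<longleftrightarrow> 0 < t \<and> t < g"
    have "cos (g/2) < (a * cis (g/2)) \<bullet> q \<longleftrightarrow> 0 < 2 * sin (t/2) * sin ((g - t)/2)"
    proof
      assume "cos (g/2) < (a * cis (g/2)) \<bullet> q" then show "0 < 2 * sin (t/2) * sin ((g - t)/2)"
        using e1 e2 by linarith
    next
      assume "0 < 2 * sin (t/2) * sin ((g - t)/2)" then show "cos (g/2) < (a * cis (g/2)) \<bullet> q"
        using e1 e2 by linarith
    qed
    then show ?thesis using e3 by simp
  qed
  then show ?thesis unfolding t_def .
qed

lemma hp_char_blk:
  assumes "blk A" "a \<in> A" "norm q = 1"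
  shows "q \<in> hp A a \<longleftrightarrow> 0 < cd a q \<and> cd a q < gp A a"
  using hp_char[of a q "gp A a"] gp_props[OF assms(1,2)] blk_norm[OF assms(1,2)] assms(3)
  by (simp add: hp_def hv_def hc_def)

lemma vertex_not_hp:
  assumes "blk A" "a \<in> A" "b \<in> A"
  shows "b \<notin> hp A a"
proof
  assume "b \<in> hp A a"
  then have h: "0 < cd a b" "cd a b < gp A a"
    using hp_char_blk assms blk_norm by auto
  then have "b \<noteq> a" using cd_self blk_norm assms by auto
  then show False using gp_props(4)[OF assms(1,2,3)] h by simp
qed

lemma hull_hp_disj:
  assumes "blk A" "a \<in> A"
  shows "convex hull A \<inter> hp A a = {}"
proof -
  have "convex hull A \<subseteq> {y. hv A a \<bullet> y \<le> hc A a}"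
    using vertex_not_hp[OF assms] by (intro hull_minimal) (auto simp: hp_def convex_halfspace_le not_less)
  then show ?thesis by (auto simp: hp_def)
qed

lemma open_hp: "open (hp A a)"
  by (simp add: hp_def open_halfspace_gt)

lemma convex_hp: "convex (hp A a)"
  by (simp add: hp_def convex_halfspace_gt)

lemma arc_disj:
  assumes "blk A" "a \<in> A" "a' \<in> A" "a \<noteq> a'" "norm q = 1" "q \<in> hp A a" "q \<in> hp A a'"
  shows False
proof -
  have n: "norm a = 1" "norm a' = 1" using assms blk_norm by auto
  have h1: "0 < cd a q" "cd a q < gp A a" using hp_char_blk assms by auto
  have h2: "0 < cd a' q" "cd a' q < gp A a'" using hp_char_blk assms by auto
  have g1: "gp A a \<le> cd a a'" using gp_props(4)[OF assms(1,2,3)] assms by auto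
  have g2: "gp A a' \<le> cd a' a" using gp_props(4)[OF assms(1,3,2)] assms by auto
  have sw: "cd a a' + cd a' a = 2*pi" using cd_swap n assms by auto
  have "cd a q = (if cd a a' + cd a' q < 2*pi then cd a a' + cd a' q else cd a a' + cd a' q - 2*pi)"
    by (rule cd_add[OF n(1) n(2) assms(5)])
  then have "cd a q = cd a a' + cd a' q \<or> cd a q = cd a a' + cd a' q - 2*pi" by (simp split: if_splits)
  then show False using h1 h2 g1 g2 sw cd_ge0[of a q] by linarith
qed

lemma ray_exists:
  fixes y t :: complex
  assumes "norm y \<le> 1" "t \<noteq> 0"
  shows "\<exists>l\<ge>0. norm (y + of_real l * t) = 1"
proof -
  define b where "b = (1 + norm y) / norm t"
  have b0: "0 \<le> b" unfolding b_def by simp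
  have "norm (y + of_real b * t) \<ge> norm (of_real b * t) - norm y"
    by (metis norm_diff_ineq add.commute)
  also have "norm (of_real b * t) = b * norm t" using b0 by (simp add: norm_mult)
  also have "b * norm t = 1 + norm y" using assms unfolding b_def by simp
  finally have "1 \<le> norm (y + of_real b * t)" by simp
  moreover have "continuous_on {0..b} (\<lambda>l. norm (y + of_real l * t))"
    by (intro continuous_intros)
  ultimately obtain l where "0 \<le> l" "l \<le> b" "norm (y + of_real l * t) = 1"
    using IVT'[of "\<lambda>l. norm (y + of_real l * t)" 0 1 b] assms b0 by auto
  then show ?thesis by auto
qed

lemma two_dir:
  fixes v1 v2 :: complex
  assumes "norm v1 = 1" "norm v2 = 1"
  shows "\<exists>t. t \<noteq> 0 \<and> 0 \<le> v1 \<bullet> t \<and> 0 \<le> v2 \<bullet> t"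
proof (cases "v1 + v2 = 0")
  case True
  then have v2: "v2 = - v1" by algebra
  have "v1 \<bullet> (\<i> * v1) = 0" by (simp add: inner_complex_def algebra_simps)
  moreover have "\<i> * v1 \<noteq> 0" using assms by auto
  ultimately show ?thesis using v2 by (intro exI[of _ "\<i> * v1"]) auto
next
  case False
  have c: "\<bar>v1 \<bullet> v2\<bar> \<le> 1" using Cauchy_Schwarz_ineq2[of v1 v2] assms by simp
  have s1: "v1 \<bullet> v1 = 1" using assms(1) by (simp add: power2_norm_eq_inner[symmetric])
  have s2: "v2 \<bullet> v2 = 1" using assms(2) by (simp add: power2_norm_eq_inner[symmetric])
  have s3: "v2 \<bullet> v1 = v1 \<bullet> v2" by (rule inner_commute)
  have "v1 \<bullet> (v1 + v2) = 1 + v1 \<bullet> v2" using s1 by (simp only: inner_add_right)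
  moreover have "v2 \<bullet> (v1 + v2) = 1 + v1 \<bullet> v2" using s2 s3 by (simp only: inner_add_right add.commute)
  ultimately show ?thesis using False c by (intro exI[of _ "v1 + v2"]) auto
qed

lemma two_hp_sphere:
  fixes v1 v2 y :: complex
  assumes "norm v1 = 1" "norm v2 = 1" "norm y \<le> 1" "c1 < v1 \<bullet> y" "c2 < v2 \<bullet> y"
  shows "\<exists>q. norm q = 1 \<and> c1 < v1 \<bullet> q \<and> c2 < v2 \<bullet> q"
proof -
  obtain t where t: "t \<noteq> 0" "0 \<le> v1 \<bullet> t" "0 \<le> v2 \<bullet> t" using two_dir assms by blast
  obtain l where l: "l \<ge> 0" "norm (y + of_real l * t) = 1" using ray_exists assms t by blast
  have e: "v \<bullet> (y + of_real l * t) = v \<bullet> y + l * (v \<bullet> t)" for v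
    by (simp add: inner_add_right scaleR_conv_of_real[symmetric])
  have p1: "l * (v1 \<bullet> t) \<ge> 0" "l * (v2 \<bullet> t) \<ge> 0" using l t by auto
  have "c1 < v1 \<bullet> (y + of_real l * t)" using e[of v1] p1 assms by linarith
  moreover have "c2 < v2 \<bullet> (y + of_real l * t)" using e[of v2] p1 assms by linarith
  ultimately show ?thesis using l by blast
qed

lemma hp_disj:
  assumes "blk A" "a \<in> A" "a' \<in> A" "a \<noteq> a'" "norm y \<le> 1" "y \<in> hp A a" "y \<in> hp A a'"
  shows False
proof -
  obtain q where "norm q = 1" "q \<in> hp A a" "q \<in> hp A a'"
    using two_hp_sphere[of "hv A a" "hv A a'" y "hc A a" "hc A a'"] assms norm_hv blk_norm
    by (auto simp: hp_def)
  then show False using arc_disj assms by blast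
qed

lemma sphere_cover:
  assumes "blk A" "norm q = 1" "q \<notin> A"
  shows "\<exists>a\<in>A. q \<in> hp A a"
proof -
  have fin: "finite A" and ne: "A \<noteq> {}" using assms by (auto simp: blk_def)
  define m where "m = Min ((\<lambda>b. cd b q) ` A)"
  have "m \<in> (\<lambda>b. cd b q) ` A" unfolding m_def using fin ne by (intro Min_in) auto
  then obtain a where a1: "a \<in> A" "m = cd a q" by auto
  have "\<forall>b\<in>A. m \<le> cd b q" unfolding m_def using fin by (auto intro: Min_le)
  then have a: "a \<in> A" "\<forall>b\<in>A. cd a q \<le> cd b q" using a1 by auto
  have na: "norm a = 1" using blk_norm assms a by auto
  have pos: "0 < cd a q" using cd_pos na assms a by auto
  have "cd a q < gp A a"
  proof (rule ccontr)
    assume "\<not> cd a q < gp A a"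
    then have le: "gp A a \<le> cd a q" by simp
    obtain b where b: "b \<in> A" "b \<noteq> a" "cd a b = gp A a" using gp_props(3)[OF assms(1) a(1)] by auto
    have nb: "norm b = 1" using blk_norm assms b by auto
    have "cd a q = (if cd a b + cd b q < 2*pi then cd a b + cd b q else cd a b + cd b q - 2*pi)"
      by (rule cd_add[OF na nb assms(2)])
    moreover have "cd b q \<ge> cd a q" using a b by auto
    moreover have "gp A a > 0" using gp_props(1)[OF assms(1) a(1)] .
    ultimately have "cd a q = cd a b + cd b q \<or> cd a q = cd a b + cd b q - 2*pi" by (simp split: if_splits)
    then show False using b le cd_less[of a q] cd_less[of b q] cd_ge0[of b q] \<open>cd b q \<ge> cd a q\<close> \<open>gp A a > 0\<close> by linarith
  qed
  then show ?thesis using hp_char_blk assms a pos by auto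
qed

lemma chord_seg:
  fixes a y :: complex
  assumes "norm a = 1" "0 < g" "g < 2*pi" "norm y \<le> 1"
    "(a * cis (g/2)) \<bullet> y = cos (g/2)"
  shows "y \<in> closed_segment a (a * cis g)"
proof -
  define v where "v = a * cis (g/2)"
  define c where "c = cos (g/2)"
  define S where "S = sin (g/2)"
  have S0: "S > 0" unfolding S_def using assms by (intro sin_gt_zero) auto
  have nv: "norm v = 1" using assms by (simp add: v_def norm_mult)
  define y' where "y' = cnj v * y"
  have yy: "y = v * y'" unfolding y'_def using cnj_self_mult[OF nv] by (metis mult.assoc mult.commute mult.left_neutral)
  have Re: "Re y' = c" using assms(5) unfolding y'_def c_def v_def by (simp add: inner_Re_cnj)
  have "norm y' \<le> 1" using assms nv unfolding y'_def by (simp add: norm_mult)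
  then have "(norm y')^2 \<le> 1" by (simp add: power_le_one)
  then have sq: "(Re y')^2 + (Im y')^2 \<le> 1" by (simp add: cmod_power2)
  have cs: "c^2 + S^2 = 1" unfolding c_def S_def by (simp add: sin_cos_squared_add add.commute)
  have "(Im y')^2 \<le> S^2" using sq cs Re by simp
  then have imS: "\<bar>Im y'\<bar> \<le> S" using S0 power2_le_imp_le[of "\<bar>Im y'\<bar>" S] by simp
  define u where "u = (Im y' + S) / (2*S)"
  have u0: "0 \<le> u" "u \<le> 1" unfolding u_def using imS S0 by (auto simp: field_simps)
  have a_eq: "a = v * cis (-(g/2))" unfolding v_def by (simp add: mult.assoc cis_mult)
  have b_eq: "a * cis g = v * cis (g/2)" unfolding v_def by (simp add: mult.assoc cis_mult)
  have comb: "complex_of_real (1-u) * cis (-(g/2)) + complex_of_real u * cis (g/2) = y'"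
    using S0 by (simp add: complex_eq_iff Re c_def[symmetric] S_def[symmetric] u_def field_simps)
  have "(1-u) *\<^sub>R a + u *\<^sub>R (a * cis g) = v * (complex_of_real (1-u) * cis (-(g/2)) + complex_of_real u * cis (g/2))"
    unfolding scaleR_conv_of_real b_eq by (subst (1) a_eq) (simp add: algebra_simps)
  also have "\<dots> = y" using comb yy by simp
  finally have eq: "y = (1-u) *\<^sub>R a + u *\<^sub>R (a * cis g)" by simp
  show ?thesis using eq u0 unfolding closed_segment_def by (intro CollectI exI[of _ u]) simp
qed

lemma convex_comb_in_hull:
  assumes "x \<in> convex hull A" "z \<in> convex hull A" "0 \<le> u" "u \<le> 1"
  shows "(1-u) *\<^sub>R x + u *\<^sub>R z \<in> convex hull A"
  using convexD[OF convex_convex_hull assms(1,2), of "1-u" u] assms by auto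

lemma hull_cover:
  assumes "blk A" "norm y \<le> 1" "y \<notin> convex hull A"
  shows "\<exists>a\<in>A. y \<in> hp A a"
proof (cases "norm y = 1")
  case True
  have "y \<notin> A" using assms(3) hull_subset[of A convex] by auto
  then show ?thesis using sphere_cover[OF assms(1) True] by simp
next
  case False
  then have y1: "norm y < 1" using assms by simp
  have ne: "A \<noteq> {}" using assms by (auto simp: blk_def)
  then obtain a1 where a1: "a1 \<in> A" by auto
  have na1: "norm a1 = 1" using blk_norm assms a1 by auto
  have ya: "y - a1 \<noteq> 0" using y1 na1 by auto
  obtain l where l: "l \<ge> 0" "norm (y + of_real l * (y - a1)) = 1" using ray_exists[OF assms(2) ya] by blast
  define q where "q = y + of_real l * (y - a1)"
  define \<mu> where "\<mu> = 1 / (1 + l)"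
  have mu: "0 < \<mu>" "\<mu> \<le> 1" unfolding \<mu>_def using l by auto
  have m1: "\<mu> * (1 + l) = 1" unfolding \<mu>_def using l by simp
  have "(1-\<mu>) *\<^sub>R a1 + \<mu> *\<^sub>R q = of_real (1 - \<mu> * (1 + l)) * a1 + of_real (\<mu> * (1+l)) * y"
    unfolding q_def scaleR_conv_of_real by (simp add: algebra_simps)
  also have "\<dots> = y" using m1 by simp
  finally have yq: "y = (1-\<mu>) *\<^sub>R a1 + \<mu> *\<^sub>R q" by simp
  have nq: "norm q = 1" using l q_def by simp
  have a1h: "a1 \<in> convex hull A" using a1 hull_subset[of A convex] by auto
  show ?thesis
  proof (cases "q \<in> A")
    case True
    then have "q \<in> convex hull A" using hull_subset[of A convex] by auto
    then have "y \<in> convex hull A" using yq convex_comb_in_hull[OF a1h _ _ ] mu by auto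
    then show ?thesis using assms by simp
  next
    case False
    obtain j where j: "j \<in> A" "q \<in> hp A j" using sphere_cover[OF assms(1) nq False] by blast
    define v where "v = hv A j"
    define c where "c = hc A j"
    define f0 where "f0 = v \<bullet> a1 - c"
    define f1 where "f1 = v \<bullet> q - c"
    have f0: "f0 \<le> 0" using vertex_not_hp[OF assms(1) j(1) a1] unfolding f0_def v_def c_def hp_def by auto
    have f1: "f1 > 0" using j unfolding f1_def v_def c_def hp_def by auto
    have lin: "v \<bullet> ((1-t) *\<^sub>R a1 + t *\<^sub>R q) - c = (1-t) * f0 + t * f1" for t
      unfolding f0_def f1_def by (simp add: inner_add_right algebra_simps)
    show ?thesis
    proof (cases "v \<bullet> y - c > 0")
      case True
      then show ?thesis using j unfolding hp_def v_def c_def by auto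
    next
      case fy: False
      define u0 where "u0 = - f0 / (f1 - f0)"
      have "(1-\<mu>) * f0 + \<mu> * f1 \<le> 0" using fy lin[of \<mu>] yq by simp
      then have "\<mu> * (f1 - f0) \<le> - f0" by (simp add: algebra_simps)
      then have mu_u0: "\<mu> \<le> u0" unfolding u0_def using f0 f1 by (simp add: field_simps)
      have u01: "u0 \<le> 1" unfolding u0_def using f0 f1 by (simp add: field_simps)
      have u0pos: "0 < u0" using mu mu_u0 by simp
      define w where "w = (1-u0) *\<^sub>R a1 + u0 *\<^sub>R q"
      have vw: "v \<bullet> w = c"
      proof -
        have "(1-u0) * f0 + u0 * f1 = 0" unfolding u0_def using f0 f1 by (simp add: field_simps)
        then show ?thesis using lin[of u0] unfolding w_def by simp
      qed
      have nw: "norm w \<le> 1"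
      proof -
        have "norm w \<le> norm ((1-u0) *\<^sub>R a1) + norm (u0 *\<^sub>R q)" unfolding w_def by (rule norm_triangle_ineq)
        also have "\<dots> = (1-u0) + u0" using u0pos u01 na1 nq by simp
        finally show ?thesis by simp
      qed
      obtain b where b: "b \<in> A" "b \<noteq> j" "cd j b = gp A j" using gp_props(3)[OF assms(1) j(1)] by auto
      have nj: "norm j = 1" using blk_norm assms j by auto
      have bj: "b = j * cis (gp A j)" using cd_cis[OF nj, of b] b blk_norm assms by auto
      have vw': "(j * cis (gp A j / 2)) \<bullet> w = cos (gp A j / 2)"
        using vw unfolding v_def c_def hv_def hc_def .
      have "w \<in> closed_segment j (j * cis (gp A j))"
        by (rule chord_seg[OF nj gp_props(1,2)[OF assms(1) j(1)] nw vw'])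
      also have "\<dots> \<subseteq> convex hull A" unfolding segment_convex_hull using bj b j by (intro hull_mono) auto
      finally have wh: "w \<in> convex hull A" .
      define \<theta> where "\<theta> = \<mu> / u0"
      have th: "0 \<le> \<theta>" "\<theta> \<le> 1" unfolding \<theta>_def using mu u0pos mu_u0 by (auto simp: field_simps)
      have tu: "\<theta> * u0 = \<mu>" unfolding \<theta>_def using u0pos by simp
      have "(1-\<theta>) *\<^sub>R a1 + \<theta> *\<^sub>R w = (1 - \<theta> * u0) *\<^sub>R a1 + (\<theta> * u0) *\<^sub>R q"
        unfolding w_def by (simp add: algebra_simps)
      then have "y = (1-\<theta>) *\<^sub>R a1 + \<theta> *\<^sub>R w" using tu yq by simp
      then have "y \<in> convex hull A" using convex_comb_in_hull[OF a1h wh th] by simp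
      then show ?thesis using assms by simp
    qed
  qed
qed


lemma conn_one:
  assumes "connected S" "S \<subseteq> (\<Union>i\<in>I. U i)" "\<And>i. i \<in> I \<Longrightarrow> open (U i)"
    "\<And>i j. i \<in> I \<Longrightarrow> j \<in> I \<Longrightarrow> i \<noteq> j \<Longrightarrow> U i \<inter> U j \<inter> S = {}"
    "i \<in> I" "x \<in> S" "x \<in> U i"
  shows "S \<subseteq> U i"
proof -
  define V where "V = (\<Union>j\<in>I - {i}. U j)"
  have oV: "open V" unfolding V_def using assms(3) by auto
  have d: "U i \<inter> V \<inter> S = {}" unfolding V_def using assms(4,5) by blast
  have c: "S \<subseteq> U i \<union> V" unfolding V_def using assms(2) by blast
  have "U i \<inter> S = {} \<or> V \<inter> S = {}" using connectedD[OF assms(1) assms(3)[OF assms(5)] oV d c] .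
  then have "V \<inter> S = {}" using assms(6,7) by blast
  then show ?thesis using c by blast
qed

definition ncf :: "complex set set \<Rightarrow> bool" where
  "ncf N \<longleftrightarrow> finite N \<and> (\<forall>A\<in>N. blk A) \<and>
     (\<forall>A\<in>N. \<forall>B\<in>N. A \<noteq> B \<longrightarrow> convex hull A \<inter> convex hull B = {})"

lemma ncf_subset: assumes "ncf N" "M \<subseteq> N" shows "ncf M"
  using assms unfolding ncf_def by (meson finite_subset subsetD)

lemma hull_in_cball:
  assumes "blk A" shows "convex hull A \<subseteq> cball 0 1"
  using assms by (intro hull_minimal) (auto simp: blk_def convex_cball)

lemma blk_ne: "blk A \<Longrightarrow> A \<noteq> {}"
  by (auto simp: blk_def)

lemma side:
  assumes "blk A" "blk B" "convex hull A \<inter> convex hull B = {}"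
  shows "\<exists>b\<in>B. convex hull A \<subseteq> hp B b"
proof -
  obtain a where a: "a \<in> A" using blk_ne[OF assms(1)] by auto
  have ah: "a \<in> convex hull A" using a hull_subset[of A convex] by auto
  have cov: "convex hull A \<subseteq> (\<Union>b\<in>B. hp B b)"
  proof
    fix y assume y: "y \<in> convex hull A"
    then have "norm y \<le> 1" using hull_in_cball[OF assms(1)] by auto
    moreover have "y \<notin> convex hull B" using y assms(3) by auto
    ultimately show "y \<in> (\<Union>b\<in>B. hp B b)" using hull_cover[OF assms(2)] by auto
  qed
  obtain b where b: "b \<in> B" "a \<in> hp B b" using cov ah by auto
  have "convex hull A \<subseteq> hp B b"
  proof (rule conn_one[OF _ cov _ _ b(1) ah b(2)])
    show "connected (convex hull A)" by (simp add: convex_connected)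
    show "\<And>i. i \<in> B \<Longrightarrow> open (hp B i)" by (simp add: open_hp)
    show "\<And>i j. i \<in> B \<Longrightarrow> j \<in> B \<Longrightarrow> i \<noteq> j \<Longrightarrow> hp B i \<inter> hp B j \<inter> convex hull A = {}"
      using hp_disj[OF assms(2)] hull_in_cball[OF assms(1)] by fastforce
  qed
  then show ?thesis using b by auto
qed

section \<open>Regions as intersections of caps\<close>

definition St :: "complex set set \<Rightarrow> (complex set \<Rightarrow> complex) \<Rightarrow> complex set" where
  "St N \<tau> = ball 0 1 \<inter> (\<Inter>A\<in>N. hp A (\<tau> A))"

definition DD :: "complex set set \<Rightarrow> complex set" where
  "DD N = ball 0 1 - (\<Union>A\<in>N. convex hull A)"

lemma St_open: "finite N \<Longrightarrow> open (St N \<tau>)"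
  unfolding St_def by (intro open_Int open_INT) (auto simp: open_hp)

lemma St_convex: "convex (St N \<tau>)"
  unfolding St_def by (intro convex_Int convex_INT) (auto simp: convex_hp)

lemma St_disj:
  assumes "ncf N" "\<tau> \<in> Pi\<^sub>E N (\<lambda>A. A)" "\<tau>' \<in> Pi\<^sub>E N (\<lambda>A. A)" "x \<in> St N \<tau>" "x \<in> St N \<tau>'"
  shows "\<tau> = \<tau>'"
proof (rule PiE_ext[OF assms(2,3)])
  fix A assume A: "A \<in> N"
  have "x \<in> hp A (\<tau> A)" "x \<in> hp A (\<tau>' A)" "norm x \<le> 1" using assms A by (auto simp: St_def)
  moreover have "blk A" using assms A by (auto simp: ncf_def)
  moreover have "\<tau> A \<in> A" "\<tau>' A \<in> A" using assms A by auto
  ultimately show "\<tau> A = \<tau>' A" using hp_disj by blast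
qed

lemma DD_eq:
  assumes "ncf N"
  shows "DD N = (\<Union>\<tau>\<in>Pi\<^sub>E N (\<lambda>A. A). St N \<tau>)"
proof (intro set_eqI iffI)
  fix y assume y: "y \<in> DD N"
  then have yb: "y \<in> ball 0 1" by (auto simp: DD_def)
  have ex: "\<forall>A\<in>N. \<exists>a\<in>A. y \<in> hp A a"
  proof
    fix A assume A: "A \<in> N"
    then have "y \<notin> convex hull A" using y by (auto simp: DD_def)
    moreover have "blk A" using assms A by (auto simp: ncf_def)
    ultimately show "\<exists>a\<in>A. y \<in> hp A a" using hull_cover yb by auto
  qed
  define \<tau> where "\<tau> = (\<lambda>A. if A \<in> N then (SOME a. a \<in> A \<and> y \<in> hp A a) else undefined)"
  have t1: "\<tau> A \<in> A \<and> y \<in> hp A (\<tau> A)" if "A \<in> N" for A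
    unfolding \<tau>_def using that ex someI_ex[of "\<lambda>a. a \<in> A \<and> y \<in> hp A a"] by auto
  have "\<tau> \<in> Pi\<^sub>E N (\<lambda>A. A)" using t1 by (auto simp: \<tau>_def)
  moreover have "y \<in> St N \<tau>" using t1 yb by (auto simp: St_def)
  ultimately show "y \<in> (\<Union>\<tau>\<in>Pi\<^sub>E N (\<lambda>A. A). St N \<tau>)" by blast
next
  fix y assume "y \<in> (\<Union>\<tau>\<in>Pi\<^sub>E N (\<lambda>A. A). St N \<tau>)"
  then obtain \<tau> where t: "\<tau> \<in> Pi\<^sub>E N (\<lambda>A. A)" "y \<in> St N \<tau>" by blast
  have "y \<notin> convex hull A" if A: "A \<in> N" for A
  proof -
    have "blk A" using assms A by (auto simp: ncf_def)
    moreover have "\<tau> A \<in> A" using t A by auto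
    moreover have "y \<in> hp A (\<tau> A)" using t A by (auto simp: St_def)
    ultimately show ?thesis using hull_hp_disj by blast
  qed
  then show "y \<in> DD N" using t by (auto simp: St_def DD_def)
qed

lemma regions_eq:
  assumes "ncf N"
  shows "components (DD N) = St N ` {\<tau> \<in> Pi\<^sub>E N (\<lambda>A. A). St N \<tau> \<noteq> {}}"
proof (rule components_open_unique)
  have fin: "finite N" using assms by (auto simp: ncf_def)
  show "disjoint (St N ` {\<tau> \<in> Pi\<^sub>E N (\<lambda>A. A). St N \<tau> \<noteq> {}})"
    unfolding disjoint_def using St_disj[OF assms] by blast
  show "\<Union> (St N ` {\<tau> \<in> Pi\<^sub>E N (\<lambda>A. A). St N \<tau> \<noteq> {}}) = DD N"
    using DD_eq[OF assms] by auto
  show "\<And>X. X \<in> St N ` {\<tau> \<in> Pi\<^sub>E N (\<lambda>A. A). St N \<tau> \<noteq> {}} \<Longrightarrow> open X \<and> connected X \<and> X \<noteq> {}"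
    using St_open[OF fin] St_convex convex_connected by blast
qed

lemma card_regions:
  assumes "ncf N"
  shows "card (components (DD N)) = card {\<tau> \<in> Pi\<^sub>E N (\<lambda>A. A). St N \<tau> \<noteq> {}}"
  unfolding regions_eq[OF assms]
proof (rule card_image)
  show "inj_on (St N) {\<tau> \<in> Pi\<^sub>E N (\<lambda>A. A). St N \<tau> \<noteq> {}}"
  proof (rule inj_onI)
    fix \<tau> \<tau>' assume "\<tau> \<in> {\<tau> \<in> Pi\<^sub>E N (\<lambda>A. A). St N \<tau> \<noteq> {}}" "\<tau>' \<in> {\<tau> \<in> Pi\<^sub>E N (\<lambda>A. A). St N \<tau> \<noteq> {}}"
      "St N \<tau> = St N \<tau>'"
    then show "\<tau> = \<tau>'" using St_disj[OF assms] by blast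
  qed
qed

section \<open>Counting regions\<close>

lemma mid_hp:
  assumes "blk A" "a \<in> A" "open U" "convex hull A \<inter> ball 0 1 \<subseteq> U"
  shows "U \<inter> hp A a \<noteq> {}"
proof -
  define g where "g = gp A a"
  define v where "v = hv A a"
  define c where "c = hc A a"
  have g0: "0 < g" "g < 2*pi" unfolding g_def using gp_props[OF assms(1,2)] by auto
  have na: "norm a = 1" using blk_norm assms by auto
  have nv: "norm v = 1" unfolding v_def using norm_hv[OF na] .
  obtain b where b: "b \<in> A" "b \<noteq> a" "cd a b = g" using gp_props(3)[OF assms(1,2)] g_def by auto
  have bq: "b = a * cis g" using cd_cis[OF na, of b] b blk_norm assms by auto
  have c1: "c < 1"
  proof -
    have "cos (g/2) < cos 0" using g0 by (intro cos_monotone_0_pi) auto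
    then show ?thesis unfolding c_def hc_def g_def by simp
  qed
  have c2: "-1 < c" unfolding c_def hc_def g_def[symmetric] using g0 by (intro cos_gt_neg1) auto
  define e where "e = of_real c * v"
  have "(1/2) *\<^sub>R a + (1/2) *\<^sub>R b = e"
  proof -
    have "a = v * cis (-(g/2))" unfolding v_def hv_def g_def by (simp add: mult.assoc cis_mult)
    moreover have "b = v * cis (g/2)" unfolding v_def hv_def g_def bq by (simp add: mult.assoc cis_mult)
    ultimately have "(1/2) *\<^sub>R a + (1/2) *\<^sub>R b = v * (of_real (1/2) * (cis (-(g/2)) + cis (g/2)))"
      by (simp add: scaleR_conv_of_real algebra_simps)
    also have "cis (-(g/2)) + cis (g/2) = 2 * of_real (cos (g/2))" by (simp add: complex_eq_iff)
    also have "v * (of_real (1/2) * (2 * of_real (cos (g/2)))) = e"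
      unfolding e_def c_def hc_def g_def by simp
    finally show ?thesis .
  qed
  moreover have "a \<in> convex hull A" "b \<in> convex hull A" using assms b hull_subset[of A convex] by auto
  ultimately have eh: "e \<in> convex hull A" using convex_comb_in_hull[of a A b "1/2"] by simp
  have ne: "norm e < 1" unfolding e_def using nv c1 c2 by (simp add: norm_mult)
  then have "e \<in> U" using eh assms(4) by auto
  then obtain \<epsilon> where ep: "\<epsilon> > 0" "ball e \<epsilon> \<subseteq> U" using assms(3) open_contains_ball by blast
  define \<delta> where "\<delta> = min (\<epsilon>/2) ((1-c)/2)"
  have d0: "\<delta> > 0" unfolding \<delta>_def using ep c1 by auto
  define p where "p = of_real (c + \<delta>) * v"
  have "e - p = - (of_real \<delta> * v)" unfolding e_def p_def by (simp add: algebra_simps)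
  then have "dist e p = \<delta>" unfolding dist_norm using d0 nv by (simp add: norm_mult)
  then have "p \<in> U" using ep d0 unfolding \<delta>_def by auto
  moreover have "v \<bullet> p = c + \<delta>"
  proof -
    have "v \<bullet> v = 1" using nv by (simp add: power2_norm_eq_inner[symmetric])
    moreover have "p = (c + \<delta>) *\<^sub>R v" unfolding p_def by (simp add: scaleR_conv_of_real)
    ultimately show ?thesis by simp
  qed
  then have "p \<in> hp A a" unfolding hp_def v_def c_def using d0 by simp
  ultimately show ?thesis by blast
qed

definition TT :: "complex set set \<Rightarrow> (complex set \<Rightarrow> complex) set" where
  "TT N = {\<tau> \<in> Pi\<^sub>E N (\<lambda>A. A). St N \<tau> \<noteq> {}}"

lemma finite_TT:
  assumes "ncf N" shows "finite (TT N)"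
proof -
  have "finite (Pi\<^sub>E N (\<lambda>A. A))" using assms by (intro finite_PiE) (auto simp: ncf_def blk_def)
  then show ?thesis unfolding TT_def by (rule finite_subset[rotated]) auto
qed

lemma St_upd:
  assumes "A \<notin> N"
  shows "St (insert A N) (\<tau>(A := a)) = St N \<tau> \<inter> hp A a"
proof -
  have "\<And>B. B \<in> N \<Longrightarrow> (\<tau>(A := a)) B = \<tau> B" using assms by auto
  then show ?thesis unfolding St_def by auto
qed

lemma count_step:
  assumes ncf: "ncf (insert A N)" and AN: "A \<notin> N"
  shows "card (TT (insert A N)) = card (TT N) + (card A - 1)"
proof -
  have ncfN: "ncf N" using ncf_subset[OF ncf] by auto
  have finN: "finite N" using ncfN by (auto simp: ncf_def)
  have bA: "blk A" using ncf by (auto simp: ncf_def)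
  have finA: "finite A" using bA by (auto simp: blk_def)
  have disjAB: "\<And>B. B \<in> N \<Longrightarrow> convex hull A \<inter> convex hull B = {}"
    using ncf AN unfolding ncf_def by (metis insertCI)
  have bB: "\<And>B. B \<in> N \<Longrightarrow> blk B" using ncfN by (auto simp: ncf_def)
  define f where "f = (\<lambda>\<tau>'. {a \<in> A. St N \<tau>' \<inter> hp A a \<noteq> {}})"
  define F where "F = (\<lambda>(\<tau>'::complex set \<Rightarrow> complex, a::complex). \<tau>'(A := a))"
  have img: "TT (insert A N) = F ` (SIGMA \<tau>':TT N. f \<tau>')"
  proof (intro set_eqI iffI)
    fix \<tau> assume t: "\<tau> \<in> TT (insert A N)"
    define \<tau>' where "\<tau>' = \<tau>(A := undefined)"
    have t1: "\<tau> \<in> Pi\<^sub>E (insert A N) (\<lambda>A. A)" using t by (auto simp: TT_def)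
    have t2: "\<tau>' \<in> Pi\<^sub>E N (\<lambda>A. A)" using t1 AN unfolding \<tau>'_def PiE_iff extensional_def by auto
    have eq: "\<tau> = \<tau>'(A := \<tau> A)" unfolding \<tau>'_def by simp
    have "St (insert A N) \<tau> = St N \<tau>' \<inter> hp A (\<tau> A)" by (subst eq, rule St_upd[OF AN])
    moreover have "St (insert A N) \<tau> \<noteq> {}" using t by (auto simp: TT_def)
    moreover have "\<tau> A \<in> A" using t1 by auto
    ultimately have "\<tau>' \<in> TT N" "\<tau> A \<in> f \<tau>'" using t2 unfolding TT_def f_def by auto
    moreover have "F (\<tau>', \<tau> A) = \<tau>" unfolding F_def using eq[symmetric] by simp
    ultimately show "\<tau> \<in> F ` (SIGMA \<tau>':TT N. f \<tau>')" by (metis SigmaI image_eqI)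
  next
    fix \<tau> assume "\<tau> \<in> F ` (SIGMA \<tau>':TT N. f \<tau>')"
    then obtain \<tau>' a where t: "\<tau>' \<in> TT N" "a \<in> f \<tau>'" "\<tau> = \<tau>'(A := a)" unfolding F_def by auto
    have "\<tau> \<in> Pi\<^sub>E (insert A N) (\<lambda>A. A)" using t AN unfolding TT_def f_def PiE_iff extensional_def by auto
    moreover have "St (insert A N) \<tau> \<noteq> {}" using t St_upd[OF AN] unfolding f_def by auto
    ultimately show "\<tau> \<in> TT (insert A N)" by (simp add: TT_def)
  qed
  have inj: "inj_on F (SIGMA \<tau>':TT N. f \<tau>')"
  proof (rule inj_onI)
    fix x y assume x: "x \<in> (SIGMA \<tau>':TT N. f \<tau>')" and y: "y \<in> (SIGMA \<tau>':TT N. f \<tau>')" and e: "F x = F y"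
    obtain t1 a1 where x': "x = (t1, a1)" by fastforce
    obtain t2 a2 where y': "y = (t2, a2)" by fastforce
    have ex: "t1 \<in> extensional N" "t2 \<in> extensional N" using x y x' y' by (auto simp: TT_def PiE_iff)
    have h: "t1(A := a1) = t2(A := a2)" using e x' y' by (simp add: F_def)
    have "(t1(A := a1)) A = (t2(A := a2)) A" using h by (rule arg_cong)
    then have a: "a1 = a2" by simp
    have "(t1(A := a1))(A := undefined) = (t2(A := a2))(A := undefined)" using h by (rule arg_cong)
    then have u: "t1(A := undefined) = t2(A := undefined)" by simp
    have i1: "t1(A := undefined) = t1" by (rule fun_upd_idem[of t1 A undefined, OF extensional_arb[OF ex(1) AN]])
    have i2: "t2(A := undefined) = t2" by (rule fun_upd_idem[of t2 A undefined, OF extensional_arb[OF ex(2) AN]])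
    have "t1 = t1(A := undefined)" using i1 by (rule sym)
    also have "\<dots> = t2(A := undefined)" by (rule u)
    also have "\<dots> = t2" by (rule i2)
    finally have "t1 = t2" .
    then show "x = y" using x' y' a by simp
  qed
  have finT: "finite (TT N)" using finite_TT[OF ncfN] .
  have cardS: "card (TT (insert A N)) = (\<Sum>\<tau>'\<in>TT N. card (f \<tau>'))"
    unfolding img card_image[OF inj] using finT finA by (intro card_SigmaI) (auto simp: f_def)
  have sideB: "\<forall>B\<in>N. \<exists>b\<in>B. convex hull A \<subseteq> hp B b" using side bA bB disjAB by blast
  define \<tau>0 where "\<tau>0 = (\<lambda>B. if B \<in> N then (SOME b. b \<in> B \<and> convex hull A \<subseteq> hp B b) else undefined)"
  have t0B: "\<tau>0 B \<in> B \<and> convex hull A \<subseteq> hp B (\<tau>0 B)" if "B \<in> N" for B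
    unfolding \<tau>0_def using that sideB someI_ex[of "\<lambda>b. b \<in> B \<and> convex hull A \<subseteq> hp B b"] by auto
  have t0P: "\<tau>0 \<in> Pi\<^sub>E N (\<lambda>A. A)" using t0B by (auto simp: \<tau>0_def)
  have hA: "convex hull A \<inter> ball 0 1 \<subseteq> St N \<tau>0" using t0B by (auto simp: St_def)
  have fA: "f \<tau>0 = A"
    unfolding f_def using mid_hp[OF bA _ St_open[OF finN] hA] by auto
  have t0T: "\<tau>0 \<in> TT N"
  proof -
    obtain a where "a \<in> A" using blk_ne[OF bA] by auto
    then have "St N \<tau>0 \<noteq> {}" using fA unfolding f_def by auto
    then show ?thesis using t0P by (simp add: TT_def)
  qed
  have other: "card (f \<tau>') = 1" if t: "\<tau>' \<in> TT N" "\<tau>' \<noteq> \<tau>0" for \<tau>'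
  proof -
    have tP: "\<tau>' \<in> Pi\<^sub>E N (\<lambda>A. A)" and ne: "St N \<tau>' \<noteq> {}" using t by (auto simp: TT_def)
    have dh: "St N \<tau>' \<inter> convex hull A = {}"
    proof (rule ccontr)
      assume "St N \<tau>' \<inter> convex hull A \<noteq> {}"
      then obtain z where z: "z \<in> St N \<tau>'" "z \<in> convex hull A" by auto
      then have "z \<in> St N \<tau>0" using hA by (auto simp: St_def)
      then have "\<tau>' = \<tau>0" using St_disj[OF ncfN tP t0P z(1)] by simp
      then show False using t by simp
    qed
    have cov: "St N \<tau>' \<subseteq> (\<Union>a\<in>A. hp A a)"
    proof
      fix y assume y: "y \<in> St N \<tau>'"
      then have "norm y \<le> 1" "y \<notin> convex hull A" using dh by (auto simp: St_def)
      then show "y \<in> (\<Union>a\<in>A. hp A a)" using hull_cover[OF bA] by auto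
    qed
    obtain x where x: "x \<in> St N \<tau>'" using ne by auto
    then obtain a0 where a0: "a0 \<in> A" "x \<in> hp A a0" using cov by auto
    have sub: "St N \<tau>' \<subseteq> hp A a0"
    proof (rule conn_one[OF _ cov _ _ a0(1) x a0(2)])
      show "connected (St N \<tau>')" using St_convex convex_connected by blast
      show "\<And>i. i \<in> A \<Longrightarrow> open (hp A i)" by (simp add: open_hp)
      fix i j assume ij: "i \<in> A" "j \<in> A" "i \<noteq> j"
      show "hp A i \<inter> hp A j \<inter> St N \<tau>' = {}"
      proof (rule equals0I)
        fix y assume y: "y \<in> hp A i \<inter> hp A j \<inter> St N \<tau>'"
        then have "norm y \<le> 1" by (auto simp: St_def)
        then show False using hp_disj[OF bA ij] y by blast
      qed
    qed
    have "f \<tau>' = {a0}"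
    proof (intro set_eqI iffI)
      fix a assume "a \<in> f \<tau>'"
      then obtain y where y: "a \<in> A" "y \<in> St N \<tau>'" "y \<in> hp A a" unfolding f_def by auto
      have "norm y \<le> 1" using y by (auto simp: St_def)
      have "y \<in> hp A a0" using sub y(2) by blast
      then have "a = a0" using hp_disj[OF bA y(1) a0(1)] y \<open>norm y \<le> 1\<close> by blast
      then show "a \<in> {a0}" by simp
    next
      fix a assume "a \<in> {a0}"
      then show "a \<in> f \<tau>'" unfolding f_def using a0 x by auto
    qed
    then show ?thesis by simp
  qed
  have "(\<Sum>\<tau>'\<in>TT N. card (f \<tau>')) = card (f \<tau>0) + (\<Sum>\<tau>'\<in>TT N - {\<tau>0}. card (f \<tau>'))"
    using sum.remove[OF finT t0T] by simp
  also have "(\<Sum>\<tau>'\<in>TT N - {\<tau>0}. card (f \<tau>')) = (\<Sum>\<tau>'\<in>TT N - {\<tau>0}. 1)"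
    using other by (intro sum.cong) auto
  also have "\<dots> = card (TT N) - 1" using finT t0T by simp
  finally have "card (TT (insert A N)) = card A + (card (TT N) - 1)" using cardS fA by simp
  moreover have "card (TT N) \<noteq> 0" using finT t0T by auto
  then have "card (TT N) \<ge> 1" by simp
  moreover have "card A \<ge> 1" using bA by (auto simp: blk_def)
  ultimately show ?thesis by simp
qed

lemma count_regions:
  assumes "ncf N"
  shows "card (TT N) = 1 + (\<Sum>A\<in>N. card A - 1)"
proof -
  have "finite N" using assms by (auto simp: ncf_def)
  then show ?thesis using assms
  proof (induction N rule: finite_induct)
    case empty
    have "TT {} = {\<lambda>x. undefined}"
      unfolding TT_def St_def by (auto simp: PiE_empty_domain)
    then show ?case by simp
  next
    case (insert A N)
    have "ncf N" using ncf_subset[OF insert.prems] by auto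
    then have "card (TT N) = 1 + (\<Sum>A\<in>N. card A - 1)" using insert.IH by simp
    then show ?case using count_step[OF insert.prems insert.hyps(2)] insert.hyps by simp
  qed
qed


section \<open>Arcs on the circle\<close>

definition oarc :: "complex set \<Rightarrow> complex \<Rightarrow> complex set" where
  "oarc A a = {q. norm q = 1 \<and> q \<in> hp A a}"

lemma connected_carc: "connected ((\<lambda>t. a * cis t) ` {t1..t2})"
  by (intro connected_continuous_image) (auto intro!: continuous_intros simp: cis_conv_exp)

lemma norm_cis_mult: "norm a = 1 \<Longrightarrow> norm (a * cis t) = 1"
  by (simp add: norm_mult)

lemma sphere_in_hp_cover:
  assumes "blk B" "X \<subseteq> {q. norm q = 1}" "X \<inter> B = {}"
  shows "X \<subseteq> (\<Union>b\<in>B. hp B b)"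
  using sphere_cover[OF assms(1)] assms(2,3) by blast

lemma sphere_conn_one:
  assumes "blk B" "connected X" "X \<subseteq> {q. norm q = 1}" "X \<inter> B = {}" "b \<in> B" "x \<in> X" "x \<in> hp B b"
  shows "X \<subseteq> hp B b"
proof (rule conn_one[OF assms(2) sphere_in_hp_cover[OF assms(1,3,4)] _ _ assms(5,6,7)])
  show "\<And>i. i \<in> B \<Longrightarrow> open (hp B i)" by (simp add: open_hp)
  fix i j assume ij: "i \<in> B" "j \<in> B" "i \<noteq> j"
  show "hp B i \<inter> hp B j \<inter> X = {}"
  proof (rule equals0I)
    fix y assume y: "y \<in> hp B i \<inter> hp B j \<inter> X"
    then have "norm y \<le> 1" using assms(3) by auto
    then show False using hp_disj[OF assms(1) ij] y by blast
  qed
qed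

lemma AB_disj:
  assumes "convex hull A \<inter> convex hull B = {}"
  shows "A \<inter> B = {}"
  using assms hull_subset[of A convex] hull_subset[of B convex] by blast

lemma arc_in:
  assumes bA: "blk A" and bB: "blk B" and dj: "convex hull A \<inter> convex hull B = {}"
    and \<alpha>: "\<alpha> \<in> A" and \<beta>': "\<beta>' \<in> B" and sA: "convex hull A \<subseteq> hp B \<beta>'"
    and \<alpha>': "\<alpha>' \<in> A" and sB: "convex hull B \<subseteq> hp A \<alpha>'" and ne: "\<alpha>' \<noteq> \<alpha>"
  shows "oarc A \<alpha> \<subseteq> oarc B \<beta>'"
proof -
  define g where "g = gp A \<alpha>"
  have g0: "0 < g" "g < 2*pi" unfolding g_def using gp_props[OF bA \<alpha>] by auto
  have na: "norm \<alpha> = 1" using blk_norm bA \<alpha> by auto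
  obtain b where b: "b \<in> A" "cd \<alpha> b = g" using gp_props(3)[OF bA \<alpha>] g_def by auto
  have bq: "b = \<alpha> * cis g" using cd_cis[OF na, of b] b blk_norm bA by auto
  define X where "X = (\<lambda>t. \<alpha> * cis t) ` {0..g}"
  have Xs: "X \<subseteq> {q. norm q = 1}" unfolding X_def using na by (auto simp: norm_mult)
  have AB: "A \<inter> B = {}" using AB_disj[OF dj] .
  have XB: "X \<inter> B = {}"
  proof (rule equals0I)
    fix q assume q: "q \<in> X \<inter> B"
    then obtain t where t: "t \<in> {0..g}" "q = \<alpha> * cis t" unfolding X_def by auto
    consider "t = 0" | "t = g" | "0 < t \<and> t < g" using t by force
    then show False
    proof cases
      case 1 then have "q = \<alpha>" using t by simp
      then show False using q \<alpha> AB by auto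
    next
      case 2 then have "q = b" using t bq by simp
      then show False using q b AB by auto
    next
      case 3
      have "cd \<alpha> q = t" using t 3 g0 by (intro cd_eqI[OF na]) auto
      then have "q \<in> hp A \<alpha>" using hp_char_blk[OF bA \<alpha>] t 3 na g_def by (simp add: norm_mult)
      moreover have "q \<in> hp A \<alpha>'" using q sB hull_subset[of B convex] by auto
      moreover have "norm q \<le> 1" using t na by (simp add: norm_mult)
      ultimately show False using hp_disj[OF bA \<alpha> \<alpha>' ne[symmetric]] by blast
    qed
  qed
  have aX: "\<alpha> \<in> X" unfolding X_def using g0 by (intro image_eqI[of _ _ 0]) auto
  have "\<alpha> \<in> hp B \<beta>'" using sA \<alpha> hull_subset[of A convex] by auto
  then have Xh: "X \<subseteq> hp B \<beta>'" using sphere_conn_one[OF bB _ Xs XB \<beta>' aX] connected_carc unfolding X_def by blast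
  show ?thesis
  proof
    fix q assume q: "q \<in> oarc A \<alpha>"
    then have nq: "norm q = 1" and "q \<in> hp A \<alpha>" by (auto simp: oarc_def)
    then have c: "0 < cd \<alpha> q" "cd \<alpha> q < g" using hp_char_blk[OF bA \<alpha>] g_def by auto
    have "q = \<alpha> * cis (cd \<alpha> q)" using cd_cis na nq by auto
    then have "q \<in> X" unfolding X_def using c by auto
    then show "q \<in> oarc B \<beta>'" using Xh nq by (auto simp: oarc_def)
  qed
qed

lemma arc_union:
  assumes bA: "blk A" and bB: "blk B" and dj: "convex hull A \<inter> convex hull B = {}"
    and \<alpha>: "\<alpha> \<in> A" and \<beta>: "\<beta> \<in> B" and sA: "convex hull A \<subseteq> hp B \<beta>"
    and sB: "convex hull B \<subseteq> hp A \<alpha>"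
  shows "oarc A \<alpha> \<union> oarc B \<beta> = {q. norm q = 1}"
proof (intro set_eqI iffI)
  fix q assume "q \<in> oarc A \<alpha> \<union> oarc B \<beta>"
  then show "q \<in> {q. norm q = 1}" by (auto simp: oarc_def)
next
  fix q :: complex assume "q \<in> {q. norm q = 1}"
  then have nq: "norm q = 1" by simp
  define g where "g = gp A \<alpha>"
  have g0: "0 < g" "g < 2*pi" unfolding g_def using gp_props[OF bA \<alpha>] by auto
  have na: "norm \<alpha> = 1" using blk_norm bA \<alpha> by auto
  show "q \<in> oarc A \<alpha> \<union> oarc B \<beta>"
  proof (cases "q \<in> hp A \<alpha>")
    case True then show ?thesis using nq by (auto simp: oarc_def)
  next
    case False
    define Y where "Y = (\<lambda>t. \<alpha> * cis t) ` {g..2*pi}"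
    have Ys: "Y \<subseteq> {q. norm q = 1}" unfolding Y_def using na by (auto simp: norm_mult)
    have Yh: "Y \<inter> hp A \<alpha> = {}"
    proof (rule equals0I)
      fix y assume y: "y \<in> Y \<inter> hp A \<alpha>"
      then obtain t where t: "t \<in> {g..2*pi}" "y = \<alpha> * cis t" unfolding Y_def by auto
      have ny: "norm y = 1" using t na by (simp add: norm_mult)
      have c: "0 < cd \<alpha> y" "cd \<alpha> y < g" using hp_char_blk[OF bA \<alpha> ny] y g_def by auto
      show False
      proof (cases "t = 2*pi")
        case True
        then have "y = \<alpha>" using t by simp
        then show False using c cd_self na by simp
      next
        case False
        then have "cd \<alpha> y = t" using t g0 by (intro cd_eqI[OF na]) auto
        then show False using c t by simp
      qed
    qed
    have YB: "Y \<inter> B = {}" using Yh sB hull_subset[of B convex] by blast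
    have aY: "\<alpha> \<in> Y" unfolding Y_def using g0 by (intro image_eqI[of _ _ "2*pi"]) auto
    have "\<alpha> \<in> hp B \<beta>" using sA \<alpha> hull_subset[of A convex] by auto
    then have Yb: "Y \<subseteq> hp B \<beta>" using sphere_conn_one[OF bB _ Ys YB \<beta> aY] connected_carc unfolding Y_def by blast
    define t where "t = cd \<alpha> q"
    have qt: "q = \<alpha> * cis t" unfolding t_def using cd_cis na nq by auto
    have t0: "0 \<le> t" "t < 2*pi" unfolding t_def using cd_ge0 cd_less by auto
    have "\<not> (0 < t \<and> t < g)" using False hp_char_blk[OF bA \<alpha> nq] g_def t_def by auto
    then have "t = 0 \<or> g \<le> t" using t0 by auto
    then have "q \<in> Y"
    proof
      assume "t = 0"
      then have "q = \<alpha>" using qt by simp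
      then show "q \<in> Y" using aY by simp
    next
      assume "g \<le> t"
      then show "q \<in> Y" unfolding Y_def using qt t0 by auto
    qed
    then show ?thesis using Yb nq by (auto simp: oarc_def)
  qed
qed

lemma arc_disj2:
  assumes "blk A" "a \<in> A" "a' \<in> A" "q \<in> oarc A a" "q \<in> oarc A a'"
  shows "a = a'"
  using arc_disj[OF assms(1,2,3)] assms(4,5) by (auto simp: oarc_def)

lemma classify:
  assumes bA: "blk A" and bB: "blk B" and dj: "convex hull A \<inter> convex hull B = {}"
    and \<alpha>: "\<alpha> \<in> A" and \<beta>: "\<beta> \<in> B" and int: "oarc A \<alpha> \<inter> oarc B \<beta> \<noteq> {}"
  shows "oarc A \<alpha> \<subseteq> oarc B \<beta> \<or> oarc B \<beta> \<subseteq> oarc A \<alpha> \<or> oarc A \<alpha> \<union> oarc B \<beta> = {q. norm q = 1}"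
proof -
  have dj': "convex hull B \<inter> convex hull A = {}" using dj by blast
  obtain \<beta>' where \<beta>': "\<beta>' \<in> B" "convex hull A \<subseteq> hp B \<beta>'" using side[OF bA bB dj] by blast
  obtain \<alpha>' where \<alpha>': "\<alpha>' \<in> A" "convex hull B \<subseteq> hp A \<alpha>'" using side[OF bB bA dj'] by blast
  obtain q where q: "q \<in> oarc A \<alpha>" "q \<in> oarc B \<beta>" using int by blast
  show ?thesis
  proof (cases "\<alpha>' = \<alpha>")
    case False
    have "oarc A \<alpha> \<subseteq> oarc B \<beta>'" using arc_in[OF bA bB dj \<alpha> \<beta>'(1,2) \<alpha>'(1,2) False] .
    then have "\<beta>' = \<beta>" using arc_disj2[OF bB \<beta>'(1) \<beta> _ q(2)] q(1) by blast
    then show ?thesis using \<open>oarc A \<alpha> \<subseteq> oarc B \<beta>'\<close> by simp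
  next
    case aa: True
    show ?thesis
    proof (cases "\<beta>' = \<beta>")
      case False
      have "oarc B \<beta> \<subseteq> oarc A \<alpha>'" using arc_in[OF bB bA dj' \<beta> \<alpha>'(1,2) \<beta>'(1,2) False] .
      then show ?thesis using aa by simp
    next
      case True
      then show ?thesis using arc_union[OF bA bB dj \<alpha> \<beta>] \<beta>' \<alpha>' aa by simp
    qed
  qed
qed

lemma fib_count:
  assumes "norm a = 1" "norm w = 1" "d \<ge> 1"
  obtains \<rho> where "0 \<le> \<rho>" "\<rho> < 2*pi/real d" "\<rho> = 0 \<longleftrightarrow> a ^ d = w ^ d"
    "\<And>P. card (fib d w \<inter> {z. P (cd a z)}) = card {j. j < d \<and> P (\<rho> + real j * (2*pi/real d))}"
    "finite (fib d w)"
proof -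
  define s where "s = 2*pi/real d"
  have s0: "s > 0" unfolding s_def using assms by simp
  obtain \<rho> where r: "0 \<le> \<rho>" "\<rho> < s" "\<rho> = 0 \<longleftrightarrow> a ^ d = w ^ d"
    "fib d w = (\<lambda>j. a * cis (\<rho> + real j * s)) ` {..<d}"
    "\<And>j. j < d \<Longrightarrow> cd a (a * cis (\<rho> + real j * s)) = \<rho> + real j * s"
    apply (rule fib_param[OF assms, folded s_def]) apply (rule that) apply assumption+ done
  have cnt: "card (fib d w \<inter> {z. P (cd a z)}) = card {j. j < d \<and> P (\<rho> + real j * s)}" for P
  proof -
    have "fib d w \<inter> {z. P (cd a z)} = (\<lambda>j. a * cis (\<rho> + real j * s)) ` {j. j < d \<and> P (\<rho> + real j * s)}"
      using r(4,5) by auto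
    moreover have "inj_on (\<lambda>j. a * cis (\<rho> + real j * s)) {j. j < d \<and> P (\<rho> + real j * s)}"
    proof (rule inj_onI)
      fix i j assume i: "i \<in> {j. j < d \<and> P (\<rho> + real j * s)}" and j: "j \<in> {j. j < d \<and> P (\<rho> + real j * s)}"
        and e: "a * cis (\<rho> + real i * s) = a * cis (\<rho> + real j * s)"
      have "\<rho> + real i * s = cd a (a * cis (\<rho> + real i * s))" using r(5) i by simp
      also have "\<dots> = cd a (a * cis (\<rho> + real j * s))" by (rule arg_cong[OF e])
      also have "\<dots> = \<rho> + real j * s" using r(5) j by simp
      finally have "\<rho> + real i * s = \<rho> + real j * s" .
      then show "i = j" using s0 by simp
    qed
    ultimately show ?thesis by (simp add: card_image)
  qed
  have fin: "finite (fib d w)" using r(4) by simp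
  show ?thesis by (rule that[OF r(1) r(2)[unfolded s_def] r(3) cnt[unfolded s_def] fin])
qed

lemma card_fib:
  assumes "norm w = 1" "d \<ge> 1"
  shows "card (fib d w) = d"
proof -
  obtain \<rho> where c: "0 \<le> \<rho>" "\<rho> < 2*pi/real d" "\<rho> = 0 \<longleftrightarrow> w ^ d = w ^ d"
    "\<And>P. card (fib d w \<inter> {z. P (cd w z)}) = card {j. j < d \<and> P (\<rho> + real j * (2*pi/real d))}"
    "finite (fib d w)"
    apply (rule fib_count[OF assms(1) assms]) apply (rule that) apply assumption+ done
  show ?thesis using c(4)[of "\<lambda>_. True"] by simp
qed

lemma finite_fib: assumes "norm w = 1" "d \<ge> 1" shows "finite (fib d w)"
proof -
  obtain \<rho> where c: "0 \<le> \<rho>" "\<rho> < 2*pi/real d" "\<rho> = 0 \<longleftrightarrow> w ^ d = w ^ d"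
    "\<And>P. card (fib d w \<inter> {z. P (cd w z)}) = card {j. j < d \<and> P (\<rho> + real j * (2*pi/real d))}"
    "finite (fib d w)"
    apply (rule fib_count[OF assms(1) assms]) apply (rule that) apply assumption+ done
  then show ?thesis by simp
qed

lemma count_open_other:
  assumes "norm a = 1" "norm w = 1" "d \<ge> 1" "a ^ d \<noteq> w ^ d" "k \<le> d"
  shows "card (fib d w \<inter> {z. 0 < cd a z \<and> cd a z < real k * (2*pi/real d)}) = k"
proof -
  define s where "s = 2*pi/real d"
  have s0: "s > 0" unfolding s_def using assms by simp
  obtain \<rho> where r: "0 \<le> \<rho>" "\<rho> < s" "\<rho> = 0 \<longleftrightarrow> a ^ d = w ^ d"
    "\<And>P. card (fib d w \<inter> {z. P (cd a z)}) = card {j. j < d \<and> P (\<rho> + real j * s)}"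
    "finite (fib d w)"
    apply (rule fib_count[OF assms(1,2,3), folded s_def]) apply (rule that) apply assumption+ done
  have rp: "0 < \<rho>" using r assms by auto
  have "{j. j < d \<and> 0 < \<rho> + real j * s \<and> \<rho> + real j * s < real k * s} = {..<k}"
  proof (intro set_eqI iffI)
    fix j assume "j \<in> {j. j < d \<and> 0 < \<rho> + real j * s \<and> \<rho> + real j * s < real k * s}"
    then have "real j * s < real k * s" using rp by auto
    then show "j \<in> {..<k}" using s0 by simp
  next
    fix j assume "j \<in> {..<k}"
    then have jk: "real j + 1 \<le> real k" by simp
    have js: "0 \<le> real j * s" using s0 by simp
    have "\<rho> + real j * s < s + real j * s" using r by simp
    also have "\<dots> = (real j + 1) * s" by (simp add: algebra_simps)
    also have "\<dots> \<le> real k * s" using jk s0 by (intro mult_right_mono) auto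
    finally show "j \<in> {j. j < d \<and> 0 < \<rho> + real j * s \<and> \<rho> + real j * s < real k * s}"
      using \<open>j \<in> {..<k}\<close> assms(5) rp js by auto
  qed
  then show ?thesis using r(4)[of "\<lambda>x. 0 < x \<and> x < real k * s"] unfolding s_def by simp
qed

lemma count_open_same:
  assumes "norm a = 1" "norm w = 1" "d \<ge> 1" "a ^ d = w ^ d" "k \<le> d" "k \<ge> 1"
  shows "card (fib d w \<inter> {z. 0 < cd a z \<and> cd a z < real k * (2*pi/real d)}) = k - 1"
proof -
  define s where "s = 2*pi/real d"
  have s0: "s > 0" unfolding s_def using assms by simp
  obtain \<rho> where r: "0 \<le> \<rho>" "\<rho> < s" "\<rho> = 0 \<longleftrightarrow> a ^ d = w ^ d"
    "\<And>P. card (fib d w \<inter> {z. P (cd a z)}) = card {j. j < d \<and> P (\<rho> + real j * s)}"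
    "finite (fib d w)"
    apply (rule fib_count[OF assms(1,2,3), folded s_def]) apply (rule that) apply assumption+ done
  have r0: "\<rho> = 0" using r assms by auto
  have "{j. j < d \<and> 0 < \<rho> + real j * s \<and> \<rho> + real j * s < real k * s} = {1..<k}"
    using r0 s0 assms(5) by (auto simp: zero_less_mult_iff)
  then show ?thesis using r(4)[of "\<lambda>x. 0 < x \<and> x < real k * s"] unfolding s_def by simp
qed

lemma count_closed:
  assumes "norm a = 1" "norm w = 1" "d \<ge> 1" "k \<le> d"
  shows "card (fib d w \<inter> {z. cd a z = 0 \<or> real k * (2*pi/real d) \<le> cd a z}) \<ge> d - k"
proof -
  define s where "s = 2*pi/real d"
  have s0: "s > 0" unfolding s_def using assms by simp
  obtain \<rho> where r: "0 \<le> \<rho>" "\<rho> < s" "\<rho> = 0 \<longleftrightarrow> a ^ d = w ^ d"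
    "\<And>P. card (fib d w \<inter> {z. P (cd a z)}) = card {j. j < d \<and> P (\<rho> + real j * s)}"
    "finite (fib d w)"
    apply (rule fib_count[OF assms(1,2,3), folded s_def]) apply (rule that) apply assumption+ done
  have sub: "{k..<d} \<subseteq> {j. j < d \<and> (\<rho> + real j * s = 0 \<or> real k * s \<le> \<rho> + real j * s)}"
  proof
    fix j assume j: "j \<in> {k..<d}"
    then have "real k * s \<le> real j * s" using s0 by (intro mult_right_mono) auto
    then have "real k * s \<le> \<rho> + real j * s" using r(1) by linarith
    then show "j \<in> {j. j < d \<and> (\<rho> + real j * s = 0 \<or> real k * s \<le> \<rho> + real j * s)}" using j by simp
  qed
  have "d - k = card {k..<d}" by simp
  also have "\<dots> \<le> card {j. j < d \<and> (\<rho> + real j * s = 0 \<or> real k * s \<le> \<rho> + real j * s)}"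
    by (rule card_mono[OF _ sub]) auto
  finally show ?thesis using r(4)[of "\<lambda>x. x = 0 \<or> real k * s \<le> x"] unfolding s_def by simp
qed

section \<open>Laminar counting\<close>

lemma lam_count:
  assumes finSh: "finite Sh" and lam: "\<And>I J. I \<in> Sh \<Longrightarrow> J \<in> Sh \<Longrightarrow> I \<subseteq> J \<or> J \<subseteq> I \<or> I \<inter> J = {}"
    and finW: "finite W" and finF: "finite F" and sub: "\<And>I. I \<in> Sh \<Longrightarrow> I \<subseteq> M"
    and wt: "\<And>I. I \<in> Sh \<Longrightarrow> card (W \<inter> I) \<le> card (F \<inter> I)"
    and lt: "card (F \<inter> M) < card (W \<inter> M)"
  shows "\<not> (W \<inter> M \<subseteq> \<Union>Sh)"
proof
  assume cov: "W \<inter> M \<subseteq> \<Union>Sh"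
  define Mx where "Mx = {I \<in> Sh. \<forall>J\<in>Sh. I \<subseteq> J \<longrightarrow> I = J}"
  have finMx: "finite Mx" unfolding Mx_def using finSh by simp
  have un: "\<Union>Sh = \<Union>Mx"
  proof
    show "\<Union>Sh \<subseteq> \<Union>Mx"
    proof
      fix x assume "x \<in> \<Union>Sh"
      then obtain I where I: "I \<in> Sh" "x \<in> I" by auto
      obtain m where m: "m \<in> Sh" "I \<subseteq> m" "\<forall>b\<in>Sh. m \<subseteq> b \<longrightarrow> m = b"
        using finite_has_maximal2[OF finSh I(1)] by blast
      then have "m \<in> Mx" unfolding Mx_def by auto
      then show "x \<in> \<Union>Mx" using m I by auto
    qed
    show "\<Union>Mx \<subseteq> \<Union>Sh" unfolding Mx_def by auto
  qed
  have dis: "\<And>I J. I \<in> Mx \<Longrightarrow> J \<in> Mx \<Longrightarrow> I \<noteq> J \<Longrightarrow> I \<inter> J = {}"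
  proof -
    fix I J assume I: "I \<in> Mx" and J: "J \<in> Mx" and ne: "I \<noteq> J"
    have "I \<in> Sh" "J \<in> Sh" using I J unfolding Mx_def by auto
    then have "I \<subseteq> J \<or> J \<subseteq> I \<or> I \<inter> J = {}" using lam by blast
    moreover have "\<not> I \<subseteq> J" using I J ne unfolding Mx_def by auto
    moreover have "\<not> J \<subseteq> I" using I J ne unfolding Mx_def by auto
    ultimately show "I \<inter> J = {}" by blast
  qed
  have cW: "card (W \<inter> \<Union>Mx) = (\<Sum>I\<in>Mx. card (W \<inter> I))"
  proof -
    have "W \<inter> \<Union>Mx = (\<Union>I\<in>Mx. W \<inter> I)" by auto
    moreover have "card (\<Union>I\<in>Mx. W \<inter> I) = (\<Sum>I\<in>Mx. card (W \<inter> I))"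
      using finMx finW dis by (intro card_UN_disjoint) auto
    ultimately show ?thesis by simp
  qed
  have cF: "card (F \<inter> \<Union>Mx) = (\<Sum>I\<in>Mx. card (F \<inter> I))"
  proof -
    have "F \<inter> \<Union>Mx = (\<Union>I\<in>Mx. F \<inter> I)" by auto
    moreover have "card (\<Union>I\<in>Mx. F \<inter> I) = (\<Sum>I\<in>Mx. card (F \<inter> I))"
      using finMx finF dis by (intro card_UN_disjoint) auto
    ultimately show ?thesis by simp
  qed
  have "card (W \<inter> M) \<le> card (W \<inter> \<Union>Mx)" using cov un finW by (intro card_mono) auto
  also have "\<dots> \<le> (\<Sum>I\<in>Mx. card (F \<inter> I))" unfolding cW using wt unfolding Mx_def by (intro sum_mono) auto
  also have "\<dots> = card (F \<inter> \<Union>Mx)" using cF by simp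
  also have "\<dots> \<le> card (F \<inter> M)" using sub finF unfolding Mx_def by (intro card_mono) auto
  finally show False using lt by simp
qed


definition algn :: "nat \<Rightarrow> complex set set \<Rightarrow> bool" where
  "algn d N \<longleftrightarrow> (\<forall>A\<in>N. \<forall>z\<in>A. \<forall>w\<in>A. z ^ d = w ^ d)"

lemma oarc_char:
  assumes "blk B" "\<beta> \<in> B"
  shows "oarc B \<beta> = {z. norm z = 1 \<and> 0 < cd \<beta> z \<and> cd \<beta> z < gp B \<beta>}"
  using hp_char_blk[OF assms] unfolding oarc_def by auto

lemma gap_mult:
  assumes d: "d \<ge> 1" and bA: "blk A" and al: "\<forall>z\<in>A. \<forall>w\<in>A. z ^ d = w ^ d" and a: "a \<in> A"
  shows "\<exists>k. 1 \<le> k \<and> k \<le> d \<and> gp A a = real k * (2*pi/real d)"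
proof -
  define s where "s = 2*pi/real d"
  have s0: "s > 0" unfolding s_def using d by simp
  have na: "norm a = 1" using blk_norm bA a by auto
  obtain \<rho> where r: "0 \<le> \<rho>" "\<rho> < s" "\<rho> = 0 \<longleftrightarrow> a ^ d = a ^ d"
    "fib d a = (\<lambda>j. a * cis (\<rho> + real j * s)) ` {..<d}"
    "\<And>j. j < d \<Longrightarrow> cd a (a * cis (\<rho> + real j * s)) = \<rho> + real j * s"
    apply (rule fib_param[OF na na d, folded s_def]) apply (rule that) apply assumption+ done
  have r0: "\<rho> = 0" using r(3) by simp
  obtain b where b: "b \<in> A" "b \<noteq> a" "cd a b = gp A a" using gp_props(3)[OF bA a] by auto
  have "b ^ d = a ^ d" using al b(1) a by blast
  then have "b \<in> fib d a" using blk_norm[OF bA b(1)] by (simp add: fib_def)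
  then obtain j where j: "j < d" "b = a * cis (\<rho> + real j * s)" using r(4) by auto
  have "gp A a = real j * s" using b(3) r(5)[OF j(1)] j(2) r0 by simp
  moreover have "j \<ge> 1"
  proof (rule ccontr)
    assume "\<not> j \<ge> 1" then have "j = 0" by simp
    then have "gp A a = 0" using \<open>gp A a = real j * s\<close> by simp
    then show False using gp_props(1)[OF bA a] by simp
  qed
  ultimately show ?thesis using j(1) unfolding s_def by (intro exI[of _ j]) auto
qed

lemma arcs_meet:
  assumes "ncf N" "\<tau> \<in> Pi\<^sub>E N (\<lambda>A. A)" "St N \<tau> \<noteq> {}" "A \<in> N" "B \<in> N"
  shows "oarc A (\<tau> A) \<inter> oarc B (\<tau> B) \<noteq> {}"
proof -
  obtain y where y: "y \<in> St N \<tau>" using assms(3) by auto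
  have bA: "blk A" "blk B" using assms by (auto simp: ncf_def)
  have ta: "\<tau> A \<in> A" "\<tau> B \<in> B" using assms by auto
  have y1: "norm y \<le> 1" and "y \<in> hp A (\<tau> A)" "y \<in> hp B (\<tau> B)" using y assms(4,5) by (auto simp: St_def)
  then have h1: "hc A (\<tau> A) < hv A (\<tau> A) \<bullet> y" and h2: "hc B (\<tau> B) < hv B (\<tau> B) \<bullet> y"
    unfolding hp_def by auto
  have n1: "norm (hv A (\<tau> A)) = 1" using norm_hv blk_norm[OF bA(1) ta(1)] by blast
  have n2: "norm (hv B (\<tau> B)) = 1" using norm_hv blk_norm[OF bA(2) ta(2)] by blast
  obtain q where "norm q = 1" "hc A (\<tau> A) < hv A (\<tau> A) \<bullet> q" "hc B (\<tau> B) < hv B (\<tau> B) \<bullet> q"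
    using two_hp_sphere[OF n1 n2 y1 h1 h2] by blast
  then show ?thesis unfolding oarc_def hp_def by auto
qed

lemma W_hit:
  assumes d: "d \<ge> 1" and ncf: "ncf N" and al: "algn d N" and nw: "norm w = 1"
    and gen: "\<forall>A\<in>N. \<forall>z\<in>A. z ^ d \<noteq> w ^ d"
    and tP: "\<tau> \<in> Pi\<^sub>E N (\<lambda>A. A)" and tne: "St N \<tau> \<noteq> {}"
  shows "\<exists>q\<in>fib d w. \<forall>A\<in>N. q \<in> hp A (\<tau> A)"
proof (cases "N = {}")
  case True
  have "w \<in> fib d w" using nw by (simp add: fib_def)
  then show ?thesis using True by blast
next
  case False
  define s where "s = 2*pi/real d"
  define sph where "sph = {q::complex. norm q = 1}"
  have finN: "finite N" using ncf by (auto simp: ncf_def)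
  have bN: "\<And>A. A \<in> N \<Longrightarrow> blk A" using ncf by (auto simp: ncf_def)
  have djN: "\<And>A B. A \<in> N \<Longrightarrow> B \<in> N \<Longrightarrow> A \<noteq> B \<Longrightarrow> convex hull A \<inter> convex hull B = {}"
    using ncf by (auto simp: ncf_def)
  have tA: "\<And>A. A \<in> N \<Longrightarrow> \<tau> A \<in> A" using tP by auto
  define Ar where "Ar = (\<lambda>A. oarc A (\<tau> A)) ` N"
  have "finite Ar" "Ar \<noteq> {}" unfolding Ar_def using finN False by auto
  then obtain M where M: "M \<in> Ar" "\<forall>X\<in>Ar. X \<subseteq> M \<longrightarrow> M = X"
    using finite_has_minimal[of Ar] by blast
  then obtain As where As: "As \<in> N" "M = oarc As (\<tau> As)" unfolding Ar_def by auto
  define \<alpha> where "\<alpha> = \<tau> As"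
  have \<alpha>A: "\<alpha> \<in> As" unfolding \<alpha>_def using tA As by auto
  have bAs: "blk As" using bN As by auto
  have na: "norm \<alpha> = 1" using blk_norm bAs \<alpha>A by auto
  have alAs: "\<forall>z\<in>As. \<forall>w\<in>As. z ^ d = w ^ d" using al As(1) unfolding algn_def by blast
  obtain k where k: "1 \<le> k" "k \<le> d" "gp As \<alpha> = real k * s"
    using gap_mult[OF d bAs alAs \<alpha>A] unfolding s_def by blast
  define Co where "Co = {B \<in> N. \<not> M \<subseteq> oarc B (\<tau> B)}"
  have shB: "sph - oarc B (\<tau> B) \<subseteq> M" if B: "B \<in> Co" for B
  proof -
    have BN: "B \<in> N" and nM: "\<not> M \<subseteq> oarc B (\<tau> B)" using B by (auto simp: Co_def)
    have BA: "B \<noteq> As" using nM As by auto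
    have "oarc As (\<tau> As) \<subseteq> oarc B (\<tau> B) \<or> oarc B (\<tau> B) \<subseteq> oarc As (\<tau> As) \<or> oarc As (\<tau> As) \<union> oarc B (\<tau> B) = {q. norm q = 1}"
      by (rule classify[OF bAs bN[OF BN] djN[OF As(1) BN BA[symmetric]] tA[OF As(1)] tA[OF BN] arcs_meet[OF ncf tP tne As(1) BN]])
    then have "oarc As \<alpha> \<subseteq> oarc B (\<tau> B) \<or> oarc B (\<tau> B) \<subseteq> oarc As \<alpha> \<or> oarc As \<alpha> \<union> oarc B (\<tau> B) = sph"
      unfolding \<alpha>_def sph_def .
    moreover have "oarc B (\<tau> B) \<in> Ar" unfolding Ar_def using BN by auto
    moreover have "M = oarc As \<alpha>" using As \<alpha>_def by simp
    ultimately have "oarc As \<alpha> \<union> oarc B (\<tau> B) = sph" using M(2) nM by blast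
    then show ?thesis using \<open>M = oarc As \<alpha>\<close> by blast
  qed
  define Sh where "Sh = (\<lambda>B. sph - oarc B (\<tau> B)) ` Co"
  define W where "W = fib d w"
  define F where "F = fib d \<alpha>"
  have finW: "finite W" unfolding W_def using finite_fib nw d by auto
  have finF: "finite F" unfolding F_def using finite_fib na d by auto
  have Wsph: "W \<subseteq> sph" "F \<subseteq> sph" unfolding W_def F_def sph_def fib_def by auto
  have lam: "I \<subseteq> J \<or> J \<subseteq> I \<or> I \<inter> J = {}" if I: "I \<in> Sh" and J: "J \<in> Sh" for I J
  proof -
    obtain B1 where B1: "B1 \<in> Co" "I = sph - oarc B1 (\<tau> B1)" using I unfolding Sh_def by auto
    obtain B2 where B2: "B2 \<in> Co" "J = sph - oarc B2 (\<tau> B2)" using J unfolding Sh_def by auto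
    have BN: "B1 \<in> N" "B2 \<in> N" using B1 B2 by (auto simp: Co_def)
    show ?thesis
    proof (cases "B1 = B2")
      case True then show ?thesis using B1 B2 by auto
    next
      case False
      have "oarc B1 (\<tau> B1) \<subseteq> oarc B2 (\<tau> B2) \<or> oarc B2 (\<tau> B2) \<subseteq> oarc B1 (\<tau> B1) \<or>
            oarc B1 (\<tau> B1) \<union> oarc B2 (\<tau> B2) = {q. norm q = 1}"
        by (rule classify[OF bN[OF BN(1)] bN[OF BN(2)] djN[OF BN False] tA[OF BN(1)] tA[OF BN(2)] arcs_meet[OF ncf tP tne BN]])
      then show ?thesis using B1(2) B2(2) unfolding sph_def by blast
    qed
  qed
  have wt: "card (W \<inter> I) \<le> card (F \<inter> I)" if I: "I \<in> Sh" for I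
  proof -
    obtain B where B: "B \<in> Co" "I = sph - oarc B (\<tau> B)" using I unfolding Sh_def by auto
    have BN: "B \<in> N" using B by (auto simp: Co_def)
    define \<beta> where "\<beta> = \<tau> B"
    have \<beta>B: "\<beta> \<in> B" unfolding \<beta>_def using tA BN by auto
    have bB: "blk B" using bN BN by auto
    have nb: "norm \<beta> = 1" using blk_norm bB \<beta>B by auto
    have alB: "\<forall>z\<in>B. \<forall>w\<in>B. z ^ d = w ^ d" using al BN unfolding algn_def by blast
    obtain kb where kb: "1 \<le> kb" "kb \<le> d" "gp B \<beta> = real kb * s"
      using gap_mult[OF d bB alB \<beta>B] unfolding s_def by blast
    have "W \<inter> oarc B \<beta> = fib d w \<inter> {z. 0 < cd \<beta> z \<and> cd \<beta> z < real kb * s}"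
      unfolding W_def oarc_char[OF bB \<beta>B] kb(3) by (auto simp: fib_def)
    then have c1: "card (W \<inter> oarc B \<beta>) = kb"
      using count_open_other[OF nb nw d _ kb(2)] gen BN \<beta>B unfolding s_def by auto
    have "W \<inter> I = W - (W \<inter> oarc B \<beta>)" using B Wsph unfolding \<beta>_def by auto
    then have cW: "card (W \<inter> I) = d - kb"
      using c1 card_fib[OF nw d] finW unfolding W_def by (simp add: card_Diff_subset)
    have sub: "fib d \<alpha> \<inter> {z. cd \<beta> z = 0 \<or> real kb * s \<le> cd \<beta> z} \<subseteq> F \<inter> I"
    proof
      fix z assume z: "z \<in> fib d \<alpha> \<inter> {z. cd \<beta> z = 0 \<or> real kb * s \<le> cd \<beta> z}"
      then have "norm z = 1" by (auto simp: fib_def)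
      moreover have "z \<notin> oarc B \<beta>" using z unfolding oarc_char[OF bB \<beta>B] kb(3) by auto
      ultimately show "z \<in> F \<inter> I" using z B unfolding F_def sph_def \<beta>_def by auto
    qed
    have "d - kb \<le> card (fib d \<alpha> \<inter> {z. cd \<beta> z = 0 \<or> real kb * s \<le> cd \<beta> z})"
      using count_closed[OF nb na d kb(2)] unfolding s_def by simp
    also have "\<dots> \<le> card (F \<inter> I)" using sub finF by (intro card_mono) auto
    finally show ?thesis using cW by simp
  qed
  have subM: "I \<subseteq> M" if "I \<in> Sh" for I using that shB unfolding Sh_def by auto
  have MF: "F \<inter> M = fib d \<alpha> \<inter> {z. 0 < cd \<alpha> z \<and> cd \<alpha> z < real k * s}"
    unfolding F_def As(2) \<alpha>_def[symmetric] oarc_char[OF bAs \<alpha>A] k(3) by (auto simp: fib_def)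
  have MW: "W \<inter> M = fib d w \<inter> {z. 0 < cd \<alpha> z \<and> cd \<alpha> z < real k * s}"
    unfolding W_def As(2) \<alpha>_def[symmetric] oarc_char[OF bAs \<alpha>A] k(3) by (auto simp: fib_def)
  have cF: "card (F \<inter> M) = k - 1"
    unfolding MF s_def using count_open_same[OF na na d refl k(2,1)] .
  have cWM: "card (W \<inter> M) = k"
    unfolding MW s_def using count_open_other[OF na nw d _ k(2)] gen As \<alpha>A by auto
  have lt: "card (F \<inter> M) < card (W \<inter> M)" using cF cWM k(1) by simp
  have finSh: "finite Sh" unfolding Sh_def Co_def using finN by simp
  have "\<not> (W \<inter> M \<subseteq> \<Union>Sh)" using lam_count[OF finSh lam finW finF subM wt lt] by blast
  then obtain q where q: "q \<in> W" "q \<in> M" "q \<notin> \<Union>Sh" by blast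
  have "q \<in> hp B (\<tau> B)" if BN: "B \<in> N" for B
  proof (cases "B \<in> Co")
    case True
    then have "q \<notin> sph - oarc B (\<tau> B)" using q(3) unfolding Sh_def by auto
    then have "q \<in> oarc B (\<tau> B)" using q(1) Wsph by auto
    then show ?thesis by (auto simp: oarc_def)
  next
    case False
    then have "M \<subseteq> oarc B (\<tau> B)" using BN by (auto simp: Co_def)
    then show ?thesis using q(2) by (auto simp: oarc_def)
  qed
  then show ?thesis using q(1) unfolding W_def by blast
qed


lemma exists_generic:
  assumes d: "d \<ge> 1" and fin: "finite Z"
  shows "\<exists>w::complex. norm w = 1 \<and> w ^ d \<notin> Z"
proof -
  define K where "K = card Z + 1"
  define f where "f = (\<lambda>j::nat. cis (2*pi*real j/(real d * real K)))"
  have K0: "K > 0" unfolding K_def by simp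
  have fd: "(f j) ^ d = cis (2*pi*real j/real K)" for j
    unfolding f_def using d by (simp add: Complex.DeMoivre field_simps)
  have inj: "inj_on (\<lambda>j. (f j) ^ d) {..<K}"
  proof (rule inj_onI)
    fix i j assume i: "i \<in> {..<K}" and j: "j \<in> {..<K}" and e: "(f i) ^ d = (f j) ^ d"
    have lt: "2*pi*real m/real K < 2*pi" if "m < K" for m
      using that K0 by (simp add: field_simps)
    have "2*pi*real i/real K = cd 1 (cis (2*pi*real i/real K))"
      using lt[of i] i by (intro cd_eqI[symmetric]) auto
    also have "\<dots> = cd 1 (cis (2*pi*real j/real K))" using e fd by simp
    also have "\<dots> = 2*pi*real j/real K"
      using lt[of j] j by (intro cd_eqI) auto
    finally show "i = j" using K0 by (simp add: field_simps)
  qed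
  have "card ((\<lambda>j. (f j) ^ d) ` {..<K}) = K" using card_image[OF inj] by simp
  then have "\<not> (\<lambda>j. (f j) ^ d) ` {..<K} \<subseteq> Z"
  proof -
    assume cK: "card ((\<lambda>j. (f j) ^ d) ` {..<K}) = K"
    show ?thesis
    proof
      assume sub: "(\<lambda>j. (f j) ^ d) ` {..<K} \<subseteq> Z"
      have "card ((\<lambda>j. (f j) ^ d) ` {..<K}) \<le> card Z" by (rule card_mono[OF fin sub])
      then show False using cK unfolding K_def by simp
    qed
  qed
  then obtain j where "(f j) ^ d \<notin> Z" by auto
  moreover have "norm (f j) = 1" unfolding f_def by simp
  ultimately show ?thesis by blast
qed

lemma main_geo:
  assumes d: "d \<ge> 1" and ncf: "ncf N" and al: "algn d N"
  shows "card (TT N) \<le> d \<and>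
    (card (TT N) < d \<longrightarrow> (\<exists>q1 q2. q1 \<noteq> q2 \<and> norm q1 = 1 \<and> norm q2 = 1 \<and> q1 ^ d = q2 ^ d \<and>
       (\<forall>A\<in>N. q1 \<notin> A \<and> q2 \<notin> A \<and> convex hull {q1, q2} \<inter> convex hull A = {})))"
proof -
  have finN: "finite N" using ncf by (auto simp: ncf_def)
  have bN: "\<And>A. A \<in> N \<Longrightarrow> blk A" using ncf by (auto simp: ncf_def)
  have "finite (\<Union>N)" using finN bN by (auto simp: blk_def)
  then have "finite ((\<lambda>z. z ^ d) ` \<Union>N)" by simp
  then obtain w :: complex where nw: "norm w = 1" and wZ: "w ^ d \<notin> (\<lambda>z. z ^ d) ` \<Union>N"
    using exists_generic[OF d] by blast
  have gen: "\<forall>A\<in>N. \<forall>z\<in>A. z ^ d \<noteq> w ^ d"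
  proof (intro ballI notI)
    fix A z assume A: "A \<in> N" and z: "z \<in> A" and e: "z ^ d = w ^ d"
    have "z \<in> \<Union>N" using A z by blast
    then have "w ^ d \<in> (\<lambda>z. z ^ d) ` \<Union>N" using e by (intro image_eqI[of _ _ z]) simp_all
    then show False using wZ by simp
  qed
  define W where "W = fib d w"
  have finW: "finite W" unfolding W_def using finite_fib[OF nw d] .
  have cW: "card W = d" unfolding W_def using card_fib[OF nw d] .
  have Wn: "\<And>q. q \<in> W \<Longrightarrow> norm q = 1" unfolding W_def fib_def by auto
  have WA: "\<And>q A. q \<in> W \<Longrightarrow> A \<in> N \<Longrightarrow> q \<notin> A" unfolding W_def fib_def using gen by auto
  define \<Phi> where "\<Phi> = (\<lambda>q. \<lambda>A. if A \<in> N then (SOME a. a \<in> A \<and> q \<in> hp A a) else undefined)"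
  have \<Phi>p: "\<Phi> q A \<in> A \<and> q \<in> hp A (\<Phi> q A)" if q: "q \<in> W" and A: "A \<in> N" for q A
  proof -
    have "\<exists>a\<in>A. q \<in> hp A a" using sphere_cover[OF bN[OF A] Wn[OF q] WA[OF q A]] .
    then have "\<exists>a. a \<in> A \<and> q \<in> hp A a" by blast
    then have "(SOME a. a \<in> A \<and> q \<in> hp A a) \<in> A \<and> q \<in> hp A (SOME a. a \<in> A \<and> q \<in> hp A a)"
      by (rule someI_ex)
    then show ?thesis unfolding \<Phi>_def using A by simp
  qed
  have \<Phi>P: "\<Phi> q \<in> Pi\<^sub>E N (\<lambda>A. A)" if q: "q \<in> W" for q
    using \<Phi>p[OF q] unfolding PiE_iff extensional_def \<Phi>_def by auto
  have \<Phi>T: "\<Phi> q \<in> TT N" if q: "q \<in> W" for q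
  proof -
    define U where "U = (\<Inter>A\<in>N. hp A (\<Phi> q A))"
    have oU: "open U" unfolding U_def using finN by (intro open_INT) (auto simp: open_hp)
    have qU: "q \<in> U" unfolding U_def using \<Phi>p[OF q] by auto
    obtain e where e: "e > 0" "ball q e \<subseteq> U" using oU qU open_contains_ball by blast
    define \<delta> where "\<delta> = min (e/2) (1/2)"
    have d0: "0 < \<delta>" "\<delta> < 1" "\<delta> < e" unfolding \<delta>_def using e by auto
    define p where "p = of_real (1 - \<delta>) * q"
    have "norm p = norm (of_real (1 - \<delta>) :: complex) * norm q" unfolding p_def by (rule norm_mult)
    also have "norm (of_real (1 - \<delta>) :: complex) = \<bar>1 - \<delta>\<bar>" by (rule norm_of_real)
    finally have np: "norm p = 1 - \<delta>" using Wn[OF q] d0 by simp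
    have "q - p = of_real \<delta> * q" unfolding p_def by (simp add: algebra_simps)
    then have "dist q p = \<delta>" unfolding dist_norm using Wn[OF q] d0 by (simp add: norm_mult)
    then have "p \<in> U" using e d0 by auto
    then have "p \<in> St N (\<Phi> q)" unfolding St_def U_def using np d0 by auto
    then show ?thesis using \<Phi>P[OF q] unfolding TT_def by auto
  qed
  have sur: "TT N \<subseteq> \<Phi> ` W"
  proof
    fix \<tau> assume t: "\<tau> \<in> TT N"
    then have tP: "\<tau> \<in> Pi\<^sub>E N (\<lambda>A. A)" and tne: "St N \<tau> \<noteq> {}" by (auto simp: TT_def)
    obtain q where q: "q \<in> fib d w" "\<forall>A\<in>N. q \<in> hp A (\<tau> A)"
      using W_hit[OF d ncf al nw gen tP tne] by blast
    have qW: "q \<in> W" using q W_def by simp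
    have "\<Phi> q = \<tau>"
    proof (rule PiE_ext[OF \<Phi>P[OF qW] tP])
      fix A assume A: "A \<in> N"
      have "\<Phi> q A \<in> A" "q \<in> hp A (\<Phi> q A)" using \<Phi>p[OF qW A] by auto
      moreover have "\<tau> A \<in> A" "q \<in> hp A (\<tau> A)" using tP q A by auto
      moreover have "norm q \<le> 1" using Wn[OF qW] by simp
      ultimately show "\<Phi> q A = \<tau> A" using hp_disj[OF bN[OF A]] by blast
    qed
    then show "\<tau> \<in> \<Phi> ` W" using qW by blast
  qed
  have img: "\<Phi> ` W = TT N" using sur \<Phi>T by blast
  have le: "card (TT N) \<le> d" using card_image_le[OF finW, of \<Phi>] img cW by simp
  have mrg: "\<exists>q1 q2. q1 \<noteq> q2 \<and> norm q1 = 1 \<and> norm q2 = 1 \<and> q1 ^ d = q2 ^ d \<and>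
       (\<forall>A\<in>N. q1 \<notin> A \<and> q2 \<notin> A \<and> convex hull {q1, q2} \<inter> convex hull A = {})" if lt: "card (TT N) < d"
  proof -
    have "\<not> inj_on \<Phi> W"
    proof
      assume "inj_on \<Phi> W"
      then have "card (\<Phi> ` W) = card W" by (rule card_image)
      then show False using img cW lt by simp
    qed
    then obtain q1 q2 where q: "q1 \<in> W" "q2 \<in> W" "q1 \<noteq> q2" "\<Phi> q1 = \<Phi> q2"
      unfolding inj_on_def by blast
    have pw: "q1 ^ d = q2 ^ d" using q unfolding W_def fib_def by auto
    have "convex hull {q1, q2} \<inter> convex hull A = {}" if A: "A \<in> N" for A
    proof -
      have "q1 \<in> hp A (\<Phi> q1 A)" "q2 \<in> hp A (\<Phi> q1 A)" using \<Phi>p[OF q(1) A] \<Phi>p[OF q(2) A] q(4) by auto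
      then have "convex hull {q1, q2} \<subseteq> hp A (\<Phi> q1 A)" by (intro hull_minimal) (auto simp: convex_hp)
      moreover have "convex hull A \<inter> hp A (\<Phi> q1 A) = {}" using hull_hp_disj[OF bN[OF A]] \<Phi>p[OF q(1) A] by blast
      ultimately show ?thesis by blast
    qed
    then show ?thesis using q pw Wn WA by blast
  qed
  show ?thesis using le mrg by blast
qed


section \<open>Combinatorics of refinement\<close>

lemma rk_strict:
  assumes pP: "partition_on S P" and pQ: "partition_on S Q"
    and fP: "\<And>A. A \<in> P \<Longrightarrow> finite A" and fQ: "\<And>B. B \<in> Q \<Longrightarrow> finite B"
    and fNP: "finite (nonsingleton_blocks P)" and fNQ: "finite (nonsingleton_blocks Q)"
    and ref: "refines P Q" and ne: "Q \<noteq> P"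
  shows "rk P < rk Q"
proof -
  have uP: "\<Union>P = S" and dP: "disjoint P" and eP: "{} \<notin> P" using pP by (auto simp: partition_on_def)
  have uQ: "\<Union>Q = S" and dQ: "disjoint Q" and eQ: "{} \<notin> Q" using pQ by (auto simp: partition_on_def)
  define NP where "NP = nonsingleton_blocks P"
  define NQ where "NQ = nonsingleton_blocks Q"
  define PB where "PB = (\<lambda>B. {A \<in> P. A \<subseteq> B})"
  have Qeq: "B = B'" if "B \<in> Q" "B' \<in> Q" "x \<in> B" "x \<in> B'" for B B' x
    using dQ that unfolding disjoint_def by blast
  have Peq: "A = A'" if "A \<in> P" "A' \<in> P" "x \<in> A" "x \<in> A'" for A A' x
    using dP that unfolding disjoint_def by blast
  have Ane: "A \<noteq> {}" if "A \<in> P" for A using eP that by auto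
  have Bne: "B \<noteq> {}" if "B \<in> Q" for B using eQ that by auto
  have up: "\<exists>B\<in>Q. A \<subseteq> B" if "A \<in> P" for A using ref that unfolding refines_def by blast
  have unPB: "\<Union>(PB B) = B" if B: "B \<in> Q" for B
  proof
    show "\<Union>(PB B) \<subseteq> B" unfolding PB_def by auto
    show "B \<subseteq> \<Union>(PB B)"
    proof
      fix x assume x: "x \<in> B"
      then have "x \<in> S" using B uQ by auto
      then obtain A where A: "A \<in> P" "x \<in> A" using uP by auto
      obtain B' where B': "B' \<in> Q" "A \<subseteq> B'" using up[OF A(1)] by auto
      have "B' = B" using Qeq[OF B'(1) B _ x] B'(2) A(2) by auto
      then show "x \<in> \<Union>(PB B)" using A B' unfolding PB_def by auto
    qed
  qed
  have finPB: "finite (PB B)" if B: "B \<in> Q" for B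
  proof -
    have "PB B \<subseteq> Pow B" unfolding PB_def by auto
    then show ?thesis using fQ[OF B] by (auto intro: finite_subset)
  qed
  have cA1: "card A \<ge> 1" if "A \<in> P" for A using fP[OF that] Ane[OF that] by (simp add: Suc_le_eq card_gt_0_iff)
  have cardB: "card B = (\<Sum>A\<in>PB B. card A)" if B: "B \<in> Q" for B
  proof -
    have "disjoint (PB B)" using dP unfolding PB_def disjoint_def by auto
    moreover have "\<And>A. A \<in> PB B \<Longrightarrow> finite A" using fP unfolding PB_def by auto
    ultimately have "card (\<Union>(PB B)) = sum card (PB B)" by (rule card_Union_disjoint)
    then show ?thesis using unPB[OF B] by simp
  qed
  have sB: "(\<Sum>A\<in>PB B. card A - 1) = card B - card (PB B)" if B: "B \<in> Q" for B
  proof -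
    have "(\<Sum>A\<in>PB B. card A - 1) + (\<Sum>A\<in>PB B. 1) = (\<Sum>A\<in>PB B. card A - 1 + 1)"
      by (rule sum.distrib[symmetric])
    also have "\<dots> = (\<Sum>A\<in>PB B. card A)"
    proof (rule sum.cong)
      fix A assume "A \<in> PB B"
      then have "card A \<ge> 1" using cA1 unfolding PB_def by auto
      then show "card A - 1 + 1 = card A" by simp
    qed simp
    finally show ?thesis using cardB[OF B] by simp
  qed
  have cPB1: "card (PB B) \<ge> 1" if B: "B \<in> Q" for B
  proof -
    have "PB B \<noteq> {}" using unPB[OF B] Bne[OF B] by auto
    then show ?thesis using finPB[OF B] by (simp add: Suc_le_eq card_gt_0_iff)
  qed
  have cPBle: "card (PB B) \<le> card B" if B: "B \<in> Q" for B
  proof -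
    have "(\<Sum>A\<in>PB B. 1) \<le> (\<Sum>A\<in>PB B. card A)" using cA1 unfolding PB_def by (intro sum_mono) auto
    then show ?thesis using cardB[OF B] by simp
  qed
  \<comment> \<open>rk P as a double sum\<close>
  define Pst where "Pst = (\<Union>B\<in>NQ. PB B)"
  have NQQ: "NQ \<subseteq> Q" unfolding NQ_def nonsingleton_blocks_def by auto
  have NPsub: "NP \<subseteq> Pst"
  proof
    fix A assume A: "A \<in> NP"
    then have AP: "A \<in> P" and ns: "\<not> is_singleton A" unfolding NP_def nonsingleton_blocks_def by auto
    obtain B where B: "B \<in> Q" "A \<subseteq> B" using up[OF AP] by auto
    have "card A \<noteq> 1" using ns by (simp add: is_singleton_altdef)
    then have "card A \<ge> 2" using cA1[OF AP] by simp
    moreover have "card A \<le> card B" using B fQ by (intro card_mono) auto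
    ultimately have "card B \<noteq> 1" by simp
    then have "B \<in> NQ" using B unfolding NQ_def nonsingleton_blocks_def by (simp add: is_singleton_altdef)
    then show "A \<in> Pst" unfolding Pst_def PB_def using AP B by auto
  qed
  have finPst: "finite Pst" unfolding Pst_def NQ_def using fNQ finPB
    unfolding nonsingleton_blocks_def by auto
  have "rk P = (\<Sum>A\<in>NP. card A - 1)" unfolding rk_def NP_def ..
  also have "\<dots> = (\<Sum>A\<in>Pst. card A - 1)"
  proof (rule sum.mono_neutral_left[OF finPst NPsub])
    show "\<forall>i\<in>Pst - NP. card i - 1 = 0"
    proof
      fix A assume "A \<in> Pst - NP"
      then have "A \<in> P" "is_singleton A" unfolding Pst_def PB_def NP_def nonsingleton_blocks_def by auto
      then show "card A - 1 = 0" by (simp add: is_singleton_altdef)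
    qed
  qed
  also have "\<dots> = (\<Sum>B\<in>NQ. \<Sum>A\<in>PB B. card A - 1)" unfolding Pst_def
  proof (rule sum.UNION_disjoint)
    show "finite NQ" using fNQ unfolding NQ_def .
    show "\<forall>i\<in>NQ. finite (PB i)" using finPB NQQ by auto
    show "\<forall>i\<in>NQ. \<forall>j\<in>NQ. i \<noteq> j \<longrightarrow> PB i \<inter> PB j = {}"
    proof (intro ballI impI)
      fix B B' assume B: "B \<in> NQ" "B' \<in> NQ" "B \<noteq> B'"
      show "PB B \<inter> PB B' = {}"
      proof (rule equals0I)
        fix A assume A: "A \<in> PB B \<inter> PB B'"
        then have AP: "A \<in> P" "A \<subseteq> B" "A \<subseteq> B'" unfolding PB_def by auto
        obtain x where "x \<in> A" using Ane[OF AP(1)] by auto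
        then have "B = B'" using Qeq[of B B' x] B NQQ AP by auto
        then show False using B by simp
      qed
    qed
  qed
  also have "\<dots> = (\<Sum>B\<in>NQ. card B - card (PB B))" using sB NQQ by (intro sum.cong) auto
  finally have rkP: "rk P = (\<Sum>B\<in>NQ. card B - card (PB B))" .
  have rkQ: "rk Q = (\<Sum>B\<in>NQ. card B - 1)" unfolding rk_def NQ_def ..
  have "\<not> Q \<subseteq> P"
  proof
    assume QP: "Q \<subseteq> P"
    have "P \<subseteq> Q"
    proof
      fix A assume A: "A \<in> P"
      obtain B where B: "B \<in> Q" "A \<subseteq> B" using up[OF A] by auto
      obtain x where x: "x \<in> A" using Ane[OF A] by auto
      have "A = B" using Peq[OF A _ x, of B] QP B x by auto
      then show "A \<in> Q" using B by simp
    qed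
    then show False using QP ne by auto
  qed
  then obtain B0 where B0: "B0 \<in> Q" "B0 \<notin> P" by auto
  have c2: "card (PB B0) \<ge> 2"
  proof (rule ccontr)
    assume "\<not> card (PB B0) \<ge> 2"
    then have "card (PB B0) = 1" using cPB1[OF B0(1)] by simp
    then obtain A where "PB B0 = {A}" by (auto simp: card_Suc_eq)
    then have "B0 = A" "A \<in> P" using unPB[OF B0(1)] unfolding PB_def by auto
    then show False using B0 by simp
  qed
  have B0N: "B0 \<in> NQ"
  proof -
    have "card B0 \<ge> 2" using c2 cPBle[OF B0(1)] by simp
    then show ?thesis using B0 unfolding NQ_def nonsingleton_blocks_def by (simp add: is_singleton_altdef)
  qed
  have "(\<Sum>B\<in>NQ. card B - card (PB B)) < (\<Sum>B\<in>NQ. card B - 1)"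
  proof (rule sum_strict_mono_ex1)
    show "finite NQ" using fNQ unfolding NQ_def .
    show "\<forall>x\<in>NQ. card x - card (PB x) \<le> card x - 1" using cPB1 NQQ by (auto intro: diff_le_mono2)
    have "card B0 - card (PB B0) < card B0 - 1" using c2 cPBle[OF B0(1)] by simp
    then show "\<exists>a\<in>NQ. card a - card (PB a) < card a - 1" using B0N by blast
  qed
  then show ?thesis using rkP rkQ by simp
qed

section \<open>Partitions in NC d\<close>

lemma NC_basic:
  assumes d: "d \<ge> 1" and P: "P \<in> NC d"
  shows "\<Union>P = sphere 0 1" "disjoint P" "{} \<notin> P" "\<And>A. A \<in> P \<Longrightarrow> finite A"
    "\<And>A z. A \<in> P \<Longrightarrow> z \<in> A \<Longrightarrow> norm z = 1"
    "\<And>A z w. A \<in> P \<Longrightarrow> z \<in> A \<Longrightarrow> w \<in> A \<Longrightarrow> z ^ d = w ^ d"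
    "\<And>A B. A \<in> P \<Longrightarrow> B \<in> P \<Longrightarrow> A \<noteq> B \<Longrightarrow> convex hull A \<inter> convex hull B = {}"
proof -
  have pp: "partition_on unit_circle P" and nc: "noncrossing P" and dg: "degree_partition d P"
    using P by (auto simp: NC_def)
  show u: "\<Union>P = sphere 0 1" "disjoint P" "{} \<notin> P" using pp by (auto simp: partition_on_def unit_circle_def)
  show nz: "\<And>A z. A \<in> P \<Longrightarrow> z \<in> A \<Longrightarrow> norm z = 1" using u(1) by auto
  show pw: "\<And>A z w. A \<in> P \<Longrightarrow> z \<in> A \<Longrightarrow> w \<in> A \<Longrightarrow> z ^ d = w ^ d"
    using dg unfolding degree_partition_def by blast
  show "\<And>A B. A \<in> P \<Longrightarrow> B \<in> P \<Longrightarrow> A \<noteq> B \<Longrightarrow> convex hull A \<inter> convex hull B = {}"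
    using nc unfolding noncrossing_def by blast
  show "finite A" if A: "A \<in> P" for A
  proof (cases "A = {}")
    case True then show ?thesis by simp
  next
    case False
    then obtain z where z: "z \<in> A" by auto
    have "A \<subseteq> fib d z" using nz[OF A] pw[OF A _ z] unfolding fib_def by auto
    then show ?thesis using finite_fib[OF nz[OF A z] d] by (rule finite_subset)
  qed
qed

lemma NC_blk:
  assumes d: "d \<ge> 1" and P: "P \<in> NC d" and A: "A \<in> nonsingleton_blocks P"
  shows "blk A"
proof -
  have AP: "A \<in> P" and ns: "\<not> is_singleton A" using A by (auto simp: nonsingleton_blocks_def)
  have fA: "finite A" using NC_basic(4)[OF d P AP] .
  have "A \<noteq> {}" using NC_basic(3)[OF d P] AP by auto
  then have "card A \<noteq> 0" using fA by simp
  moreover have "card A \<noteq> 1" using ns by (simp add: is_singleton_altdef)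
  ultimately have "card A \<ge> 2" by simp
  then show ?thesis unfolding blk_def using fA NC_basic(5)[OF d P AP] by auto
qed

lemma NC_ncf:
  assumes d: "d \<ge> 1" and P: "P \<in> NC d" and N0: "N0 \<subseteq> nonsingleton_blocks P" "finite N0"
  shows "ncf N0" "algn d N0"
proof -
  have sub: "N0 \<subseteq> P" using N0 by (auto simp: nonsingleton_blocks_def)
  show "ncf N0" unfolding ncf_def using N0 NC_blk[OF d P] NC_basic(7)[OF d P] sub by blast
  show "algn d N0" unfolding algn_def using NC_basic(6)[OF d P] sub by blast
qed

lemma NC_fin:
  assumes d: "d \<ge> 1" and P: "P \<in> NC d"
  shows "finite (nonsingleton_blocks P)"
proof (rule ccontr)
  assume "infinite (nonsingleton_blocks P)"
  then obtain N0 where N0: "finite N0" "card N0 = d" "N0 \<subseteq> nonsingleton_blocks P"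
    using infinite_arbitrarily_large by blast
  have ncf: "ncf N0" and al: "algn d N0" using NC_ncf[OF d P N0(3,1)] by auto
  have "card (TT N0) = 1 + (\<Sum>A\<in>N0. card A - 1)" using count_regions[OF ncf] .
  moreover have "(\<Sum>A\<in>N0. (1::nat)) \<le> (\<Sum>A\<in>N0. card A - 1)"
  proof (rule sum_mono)
    fix A assume "A \<in> N0"
    then have "blk A" using ncf by (auto simp: ncf_def)
    then show "1 \<le> card A - 1" by (auto simp: blk_def)
  qed
  moreover have "card (TT N0) \<le> d" using main_geo[OF d ncf al] by blast
  ultimately show False using N0(2) by simp
qed

lemma NC_regions:
  assumes d: "d \<ge> 1" and P: "P \<in> NC d"
  shows "regions P = components (DD (nonsingleton_blocks P))"
proof -
  have "cball 0 1 - (\<Union>A\<in>P. convex hull A) = DD (nonsingleton_blocks P)"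
  proof (intro set_eqI iffI)
    fix y assume y: "y \<in> cball 0 1 - (\<Union>A\<in>P. convex hull A)"
    have "norm y \<noteq> 1"
    proof
      assume "norm y = 1"
      then have "y \<in> \<Union>P" using NC_basic(1)[OF d P] by simp
      then obtain A where "A \<in> P" "y \<in> A" by auto
      then have "y \<in> convex hull A" using hull_subset[of A convex] by auto
      then show False using y \<open>A \<in> P\<close> by auto
    qed
    then have "y \<in> ball 0 1" using y by auto
    then show "y \<in> DD (nonsingleton_blocks P)" using y unfolding DD_def nonsingleton_blocks_def by auto
  next
    fix y assume y: "y \<in> DD (nonsingleton_blocks P)"
    then have yb: "norm y < 1" by (auto simp: DD_def)
    have "y \<notin> convex hull A" if A: "A \<in> P" for A
    proof (cases "is_singleton A")
      case True
      then obtain z where z: "A = {z}" by (auto simp: is_singleton_def)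
      then have "norm z = 1" using NC_basic(5)[OF d P A] by auto
      then show ?thesis using z yb by auto
    next
      case False
      then show ?thesis using y A unfolding DD_def nonsingleton_blocks_def by auto
    qed
    then show "y \<in> cball 0 1 - (\<Union>A\<in>P. convex hull A)" using yb by auto
  qed
  then show ?thesis unfolding regions_def by simp
qed

lemma NC_count:
  assumes d: "d \<ge> 1" and P: "P \<in> NC d"
  shows "finite (regions P)" "card (regions P) = rk P + 1" "card (regions P) \<le> d"
proof -
  define N where "N = nonsingleton_blocks P"
  have fN: "finite N" unfolding N_def using NC_fin[OF d P] .
  have ncf: "ncf N" and al: "algn d N" using NC_ncf[OF d P _ fN] unfolding N_def by auto
  have r: "regions P = St N ` TT N" using NC_regions[OF d P] regions_eq[OF ncf] unfolding N_def TT_def by simp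
  show "finite (regions P)" unfolding r using finite_TT[OF ncf] by simp
  have "card (regions P) = card (TT N)" using card_regions[OF ncf] NC_regions[OF d P] unfolding N_def TT_def by simp
  then show "card (regions P) = rk P + 1" using count_regions[OF ncf] unfolding rk_def N_def by simp
  show "card (regions P) \<le> d" using \<open>card (regions P) = card (TT N)\<close> main_geo[OF d ncf al] by simp
qed

lemma seg_sphere:
  fixes q1 q2 z :: complex
  assumes "norm q1 = 1" "norm q2 = 1" "norm z = 1" "z \<in> closed_segment q1 q2"
  shows "z = q1 \<or> z = q2"
proof -
  obtain u where u: "0 \<le> u" "u \<le> 1" "z = (1-u) *\<^sub>R q1 + u *\<^sub>R q2"
    using assms(4) unfolding closed_segment_def by blast
  show ?thesis
  proof (cases "u = 0 \<or> u = 1")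
    case True then show ?thesis using u by auto
  next
    case False
    then have u01: "0 < u" "u < 1" using u by auto
    have n1: "norm ((1-u) *\<^sub>R q1) = 1 - u" using assms u01 by simp
    have n2: "norm (u *\<^sub>R q2) = u" using assms u01 by simp
    have "norm ((1-u) *\<^sub>R q1 + u *\<^sub>R q2) = norm ((1-u) *\<^sub>R q1) + norm (u *\<^sub>R q2)"
      using assms(3) u(3) n1 n2 by simp
    then have "norm ((1-u) *\<^sub>R q1) *\<^sub>R (u *\<^sub>R q2) = norm (u *\<^sub>R q2) *\<^sub>R ((1-u) *\<^sub>R q1)"
      by (rule norm_triangle_eq[THEN iffD1])
    then have "(1-u) *\<^sub>R (u *\<^sub>R q2) = u *\<^sub>R ((1-u) *\<^sub>R q1)" unfolding n1 n2 .
    then have "((1-u) * u) *\<^sub>R q2 = ((1-u) * u) *\<^sub>R q1" by (simp only: scaleR_scaleR mult.commute)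
    moreover have "(1-u) * u \<noteq> 0" using u01 by simp
    ultimately have q21: "q2 = q1" by simp
    have "z = (1-u) *\<^sub>R q1 + u *\<^sub>R q1" using u(3) q21 by simp
    also have "\<dots> = ((1-u) + u) *\<^sub>R q1" by (rule scaleR_add_left[symmetric])
    finally show ?thesis by simp
  qed
qed

lemma merge:
  assumes d: "d \<ge> 1" and P: "P \<in> NC d" and lt: "card (regions P) < d"
  shows "\<exists>Q\<in>NC d. refines P Q \<and> Q \<noteq> P"
proof -
  define N where "N = nonsingleton_blocks P"
  have fN: "finite N" unfolding N_def using NC_fin[OF d P] .
  have ncf: "ncf N" and al: "algn d N" using NC_ncf[OF d P _ fN] unfolding N_def by auto
  have "card (regions P) = card (TT N)" using card_regions[OF ncf] NC_regions[OF d P] unfolding N_def TT_def by simp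
  then have "card (TT N) < d" using lt by simp
  then obtain q1 q2 where q: "q1 \<noteq> q2" "norm q1 = 1" "norm q2 = 1" "q1 ^ d = q2 ^ d"
    and qN: "\<forall>A\<in>N. q1 \<notin> A \<and> q2 \<notin> A \<and> convex hull {q1, q2} \<inter> convex hull A = {}"
    using main_geo[OF d ncf al] by blast
  have uP: "\<Union>P = sphere 0 1" and dP: "disjoint P" and eP: "{} \<notin> P"
    using NC_basic(1,2,3)[OF d P] by auto
  have single: "{q} \<in> P" if qq: "norm q = 1" "\<forall>A\<in>N. q \<notin> A" for q
  proof -
    have "q \<in> \<Union>P" using uP qq by simp
    then obtain A where A: "A \<in> P" "q \<in> A" by auto
    then have "A \<notin> N" using qq by auto
    then have "is_singleton A" using A unfolding N_def nonsingleton_blocks_def by auto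
    then have "A = {q}" using A(2) by (auto simp: is_singleton_def)
    then show ?thesis using A by simp
  qed
  have "\<forall>A\<in>N. q1 \<notin> A" "\<forall>A\<in>N. q2 \<notin> A" using qN by blast+
  then have s1: "{q1} \<in> P" and s2: "{q2} \<in> P" using single[OF q(2)] single[OF q(3)] by blast+
  have blkq: "A = {q}" if "A \<in> P" "q \<in> A" "{q} \<in> P" for A q
  proof (rule ccontr)
    assume "A \<noteq> {q}"
    then have "A \<inter> {q} = {}" using disjointD[OF dP that(1) that(3)] by blast
    then show False using that(2) by blast
  qed
  define Q where "Q = insert {q1, q2} (P - {{q1}, {q2}})"
  have old: "X \<in> P" "q1 \<notin> X" "q2 \<notin> X" if X: "X \<in> Q" "X \<noteq> {q1, q2}" for X
  proof -
    show XP: "X \<in> P" using X unfolding Q_def by auto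
    show "q1 \<notin> X" using blkq[OF XP _ s1] X unfolding Q_def by auto
    show "q2 \<notin> X" using blkq[OF XP _ s2] X unfolding Q_def by auto
  qed
  have pQ: "partition_on unit_circle Q"
    unfolding partition_on_def
  proof (intro conjI)
    show "\<Union>Q = unit_circle"
    proof
      show "\<Union>Q \<subseteq> unit_circle" unfolding Q_def unit_circle_def using uP q by auto
      show "unit_circle \<subseteq> \<Union>Q"
      proof
        fix x assume "x \<in> unit_circle"
        then have "x \<in> \<Union>P" using uP unfolding unit_circle_def by simp
        then obtain A where A: "A \<in> P" "x \<in> A" by blast
        show "x \<in> \<Union>Q"
        proof (cases "A = {q1} \<or> A = {q2}")
          case True then show ?thesis using A unfolding Q_def by auto
        next
          case False then show ?thesis using A unfolding Q_def by auto
        qed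
      qed
    qed
    show "disjoint Q"
      unfolding disjoint_def
    proof (intro ballI impI)
      fix X Y assume X: "X \<in> Q" and Y: "Y \<in> Q" and ne: "X \<noteq> Y"
      show "X \<inter> Y = {}"
      proof (cases "X = {q1, q2}")
        case True
        then have "Y \<noteq> {q1, q2}" using ne by simp
        then show ?thesis using old[OF Y] True by auto
      next
        case False
        show ?thesis
        proof (cases "Y = {q1, q2}")
          case True then show ?thesis using old[OF X False] by auto
        next
          case False2: False
          show ?thesis using disjointD[OF dP old(1)[OF X False] old(1)[OF Y False2] ne] .
        qed
      qed
    qed
    show "{} \<notin> Q" unfolding Q_def using eP by auto
  qed
  have hullq: "convex hull {q1, q2} \<inter> convex hull X = {}" if X: "X \<in> Q" "X \<noteq> {q1, q2}" for X
  proof (cases "X \<in> N")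
    case True then show ?thesis using qN by blast
  next
    case False
    then have "is_singleton X" using old(1)[OF X] unfolding N_def nonsingleton_blocks_def by auto
    then obtain z where z: "X = {z}" by (auto simp: is_singleton_def)
    have nz: "norm z = 1" using NC_basic(5)[OF d P old(1)[OF X]] z by auto
    have zq: "z \<noteq> q1" "z \<noteq> q2" using old(2,3)[OF X] z by auto
    have "z \<notin> convex hull {q1, q2}"
      using seg_sphere[OF q(2,3) nz] zq unfolding segment_convex_hull[symmetric] by blast
    then show ?thesis using z by simp
  qed
  have ncQ: "noncrossing Q"
    unfolding noncrossing_def
  proof (intro ballI impI)
    fix X Y assume X: "X \<in> Q" and Y: "Y \<in> Q" and ne: "X \<noteq> Y"
    show "convex hull X \<inter> convex hull Y = {}"
    proof (cases "X = {q1, q2}")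
      case True
      then have "Y \<noteq> {q1, q2}" using ne by simp
      then show ?thesis using hullq[OF Y] True by simp
    next
      case False
      show ?thesis
      proof (cases "Y = {q1, q2}")
        case True then show ?thesis using hullq[OF X False] by blast
      next
        case False2: False
        show ?thesis using NC_basic(7)[OF d P old(1)[OF X False] old(1)[OF Y False2] ne] .
      qed
    qed
  qed
  have dgQ: "degree_partition d Q"
    unfolding degree_partition_def
  proof (intro ballI)
    fix X z w assume X: "X \<in> Q" and z: "z \<in> X" and w: "w \<in> X"
    show "z ^ d = w ^ d"
    proof (cases "X = {q1, q2}")
      case True then show ?thesis using z w q(4) by auto
    next
      case False show ?thesis using NC_basic(6)[OF d P old(1)[OF X False] z w] .
    qed
  qed
  have QNC: "Q \<in> NC d" using pQ ncQ dgQ by (simp add: NC_def)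
  have ref: "refines P Q"
    unfolding refines_def
  proof
    fix A assume A: "A \<in> P"
    show "\<exists>B\<in>Q. A \<subseteq> B"
    proof (cases "A = {q1} \<or> A = {q2}")
      case True then show ?thesis unfolding Q_def by auto
    next
      case False then show ?thesis using A unfolding Q_def by auto
    qed
  qed
  have "{q1, q2} \<notin> P"
  proof
    assume "{q1, q2} \<in> P"
    then have "{q1, q2} = {q1}" using blkq[OF _ _ s1] by auto
    then show False using q(1) by auto
  qed
  then have "Q \<noteq> P" unfolding Q_def by auto
  then show ?thesis using QNC ref by blast
qed

theorem lemma6p10:
  fixes d :: nat and P :: "complex set set"
  assumes "d \<ge> 1" and "P \<in> NC d"
  shows "finite (nonsingleton_blocks P) \<and> finite (regions P)
         \<and> card (regions P) = rk P + 1
         \<and> (maximal_NC d P \<longleftrightarrow> card (regions P) = d)"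
proof (intro conjI)
  note d = assms(1) and P = assms(2)
  show "finite (nonsingleton_blocks P)" using NC_fin[OF d P] .
  show "finite (regions P)" using NC_count(1)[OF d P] .
  show cr: "card (regions P) = rk P + 1" using NC_count(2)[OF d P] .
  show "maximal_NC d P \<longleftrightarrow> card (regions P) = d"
  proof
    assume mx: "maximal_NC d P"
    show "card (regions P) = d"
    proof (rule ccontr)
      assume "card (regions P) \<noteq> d"
      then have "card (regions P) < d" using NC_count(3)[OF d P] by simp
      then obtain Q where "Q \<in> NC d" "refines P Q" "Q \<noteq> P" using merge[OF d P] by blast
      then show False using mx unfolding maximal_NC_def by blast
    qed
  next
    assume cd: "card (regions P) = d"
    show "maximal_NC d P"
      unfolding maximal_NC_def
    proof (intro conjI ballI impI)
      show "P \<in> NC d" using P .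
      fix Q assume Q: "Q \<in> NC d" and ref: "refines P Q"
      show "Q = P"
      proof (rule ccontr)
        assume ne: "Q \<noteq> P"
        have pP: "partition_on unit_circle P" and pQ: "partition_on unit_circle Q"
          using P Q by (auto simp: NC_def)
        have "rk P < rk Q"
          using rk_strict[OF pP pQ NC_basic(4)[OF d P] NC_basic(4)[OF d Q] NC_fin[OF d P] NC_fin[OF d Q] ref ne] .
        moreover have "rk Q + 1 \<le> d" using NC_count(2,3)[OF d Q] by simp
        ultimately show False using cr cd by simp
      qed
    qed
  qed
qed


end
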